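(* Let $\mathbf{k}$ be a field of characteristic zero and $B$ a $\mathbb{Z}$-graded $\mathbf{k}$-domain. Suppose there exist homogeneous prime elements $x_1,\dots,x_n$ ($n\ge 2$) of $B$, with $d_i=\deg x_i$, such that: the subgroup $\langle d_1,\dots,d_n\rangle$ of $\mathbb{Z}$ equals $\mathbb{Z}(B)$ and $\mathrm{type}(d_1,\dots,d_n)=0$; and for any distinct $i,j$, the elements $x_i,x_j$ are not associates in $B$. Then: (a) $\mathbb{Z}(\ker D)=\mathbb{Z}(B)$ for all $D\in\mathrm{HLND}(B)$. (b) If $B$ is finitely generated as a $\mathbf{k}$-algebra and $B$ is not rigid, then $\mathrm{HFrac}(B)$ is ruled over $\mathbf{k}$.
   Context: A $\mathbb{Z}$-graded ring is $B=\bigoplus_{i\in\mathbb{Z}}B_i$ with $B_iB_j\subseteq B_{i+j}$. A derivation $D$ is locally nilpotent if every element is killed by some power of $D$; homogeneous if $D(B_i)\subseteq B_{i+h}$ for a fixed $h$ and all $i$. $\mathrm{HLND}(B)$ is the set of homogeneous locally nilpotent derivations of $B$. $B$ is rigid if its only locally nilpotent derivation is $0$. For a graded subring $A$ (e.g. $A=\ker D$ for $D\in\mathrm{HLND}(B)$, or $A=B$), $\mathbb{Z}(A)$ is the subgroup of $\mathbb{Z}$ generated by $\{i: A\cap B_i\neq 0\}$. $\mathrm{HFrac}(B)$ is the subfield of $\mathrm{Frac}(B)$ of fractions $b/s$ with $b\in B_i$, $s\in B_i\setminus\{0\}$ for some $i$. A field extension $L/\mathbf{k}$ is ruled if $L=K^{(1)}$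 (purely transcendental of transcendence degree 1) for some intermediate field $K\supseteq \mathbf{k}$. For $S=(a_1,\dots,a_n)\in\mathbb{Z}^n$, $S_i$ denotes $S$ with the $i$-th entry removed, $J^*(S)=\{i: \gcd(S_i)\neq\gcd(S)\}$, and $\mathrm{type}(S)=|J^*(S)|$ (gcd's taken nonnegative). *)

theory Defs
  imports "HOL-Computational_Algebra.Fraction_Field"
          "HOL-Computational_Algebra.Polynomial"
          "HOL-Computational_Algebra.Factorial_Ring"
begin

definition subfield_set :: "'a::comm_ring_1 set \<Rightarrow> bool" where
  "subfield_set K \<longleftrightarrow> 0 \<in> K \<and> 1 \<in> K \<and>
     (\<forall>a\<in>K. \<forall>b\<in>K. a + b \<in> K \<and> a - b \<in> K \<and> a * b \<in> K) \<and>
     (\<forall>a\<in>K. a \<noteq> 0 \<longrightarrow> (\<exists>c\<in>K. a * c = 1))"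

(* G is a Z-grading of the K-algebra B (= the whole type 'a):
   each G i is a K-subspace, G i * G j \<subseteq> G (i+j), and B is the direct sum. *)
definition graded_algebra :: "'a::comm_ring_1 set \<Rightarrow> (int \<Rightarrow> 'a set) \<Rightarrow> bool" where
  "graded_algebra K G \<longleftrightarrow>
     (\<forall>i. 0 \<in> G i \<and> (\<forall>x\<in>G i. \<forall>y\<in>G i. x + y \<in> G i) \<and> (\<forall>c\<in>K. \<forall>x\<in>G i. c * x \<in> G i)) \<and>
     (\<forall>i j. \<forall>x\<in>G i. \<forall>y\<in>G j. x * y \<in> G (i + j)) \<and>
     (\<forall>b. \<exists>!f::int \<Rightarrow> 'a. (\<forall>i. f i \<in> G i) \<and> finite {i. f i \<noteq> 0} \<and>
            b = (\<Sum>i\<in>{i. f i \<noteq> 0}. f i))"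

definition k_derivation :: "'a::comm_ring_1 set \<Rightarrow> ('a \<Rightarrow> 'a) \<Rightarrow> bool" where
  "k_derivation K D \<longleftrightarrow>
     (\<forall>a b. D (a + b) = D a + D b) \<and>
     (\<forall>a b. D (a * b) = a * D b + b * D a) \<and>
     (\<forall>c\<in>K. \<forall>a. D (c * a) = c * D a)"

definition locally_nilpotent :: "('a::comm_ring_1 \<Rightarrow> 'a) \<Rightarrow> bool" where
  "locally_nilpotent D \<longleftrightarrow> (\<forall>b. \<exists>n. (D ^^ n) b = 0)"

definition LND :: "'a::comm_ring_1 set \<Rightarrow> ('a \<Rightarrow> 'a) set" where
  "LND K = {D. k_derivation K D \<and> locally_nilpotent D}"

definition homogeneous_map :: "(int \<Rightarrow> 'a set) \<Rightarrow> ('a \<Rightarrow> 'a) \<Rightarrow> bool" where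
  "homogeneous_map G D \<longleftrightarrow> (\<exists>h. \<forall>i. D ` G i \<subseteq> G (i + h))"

definition HLND :: "'a::comm_ring_1 set \<Rightarrow> (int \<Rightarrow> 'a set) \<Rightarrow> ('a \<Rightarrow> 'a) set" where
  "HLND K G = {D. D \<in> LND K \<and> homogeneous_map G D}"

definition rigid :: "'a::comm_ring_1 set \<Rightarrow> bool" where
  "rigid K \<longleftrightarrow> (\<forall>D\<in>LND K. D = (\<lambda>_. 0))"

definition int_subgroup_gen :: "int set \<Rightarrow> int set" where
  "int_subgroup_gen S = {x. \<exists>F c. finite F \<and> F \<subseteq> S \<and> x = (\<Sum>i\<in>F. c i * i)}"

definition degZ :: "(int \<Rightarrow> 'a::zero set) \<Rightarrow> 'a set \<Rightarrow> int set" where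
  "degZ G A = int_subgroup_gen {i. \<exists>a\<in>A \<inter> G i. a \<noteq> 0}"

definition ker :: "('a \<Rightarrow> 'b::zero) \<Rightarrow> 'a set" where
  "ker D = {b. D b = 0}"

(* type(S) for S = (a_1,...,a_n), given as a : nat \<Rightarrow> int on {1..n} *)
definition Jstar :: "nat \<Rightarrow> (nat \<Rightarrow> int) \<Rightarrow> nat set" where
  "Jstar n a = {i\<in>{1..n}. Gcd (a ` ({1..n} - {i})) \<noteq> Gcd (a ` {1..n})}"

definition type_seq :: "nat \<Rightarrow> (nat \<Rightarrow> int) \<Rightarrow> nat" where
  "type_seq n a = card (Jstar n a)"

definition alg_gen :: "'a::comm_ring_1 set \<Rightarrow> 'a set \<Rightarrow> 'a set" where
  "alg_gen K S = \<Inter>{A. K \<subseteq> A \<and> S \<subseteq> A \<and> (\<forall>x\<in>A. \<forall>y\<in>A. x + y \<in> A \<and> x * y \<in> A)}"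

definition finitely_generated_alg :: "'a::comm_ring_1 set \<Rightarrow> bool" where
  "finitely_generated_alg K \<longleftrightarrow> (\<exists>S. finite S \<and> alg_gen K S = UNIV)"

definition HFrac :: "(int \<Rightarrow> 'a::idom set) \<Rightarrow> 'a fract set" where
  "HFrac G = {Fraction_Field.Fract a s | a s k. a \<in> G k \<and> s \<in> G k \<and> s \<noteq> 0}"

definition field_gen :: "'f::field set \<Rightarrow> 'f set" where
  "field_gen S = \<Inter>{F. subfield_set F \<and> S \<subseteq> F}"

definition transcendental_over :: "'f::field set \<Rightarrow> 'f \<Rightarrow> bool" where
  "transcendental_over F t \<longleftrightarrow>
     (\<forall>p::'f poly. (\<forall>j. coeff p j \<in> F) \<and> poly p t = 0 \<longrightarrow> p = 0)"

definition ruled_over :: "'f::field set \<Rightarrow> 'f set \<Rightarrow> bool" where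
  "ruled_over L k \<longleftrightarrow> (\<exists>F t. subfield_set F \<and> k \<subseteq> F \<and> F \<subseteq> L \<and> t \<in> L \<and>
       transcendental_over F t \<and> L = field_gen (F \<union> {t}))"

end

theory Submission
  imports Defs
begin


locale gr =
  fixes K :: "'b::{idom, ring_char_0} set" and G :: "int \<Rightarrow> 'b set"
  assumes K: "subfield_set K" and G: "graded_algebra K G"
begin

lemma K0: "0 \<in> K" and K1: "1 \<in> K"
  and Kadd: "a \<in> K \<Longrightarrow> b \<in> K \<Longrightarrow> a + b \<in> K"
  and Kdiff: "a \<in> K \<Longrightarrow> b \<in> K \<Longrightarrow> a - b \<in> K"
  and Kmult: "a \<in> K \<Longrightarrow> b \<in> K \<Longrightarrow> a * b \<in> K"
  using K unfolding subfield_set_def by auto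

lemma Kof_int: "of_int z \<in> K"
proof -
  have n: "of_nat m \<in> K" for m
    by (induction m) (auto intro: K0 K1 Kadd)
  show ?thesis
  proof (cases "z \<ge> 0")
    case True then show ?thesis using n[of "nat z"] by simp
  next
    case False
    then have "of_int z = (0::'b) - of_nat (nat (-z))" by simp
    then show ?thesis using n Kdiff K0 by metis
  qed
qed

lemma G0: "0 \<in> G i" and Gadd: "x \<in> G i \<Longrightarrow> y \<in> G i \<Longrightarrow> x + y \<in> G i"
  and Gsmult: "c \<in> K \<Longrightarrow> x \<in> G i \<Longrightarrow> c * x \<in> G i"
  and Gmult: "x \<in> G i \<Longrightarrow> y \<in> G j \<Longrightarrow> x * y \<in> G (i + j)"
  using G unfolding graded_algebra_def by blast+

lemma Gex: "\<exists>!f::int \<Rightarrow> 'b. (\<forall>i. f i \<in> G i) \<and> finite {i. f i \<noteq> 0} \<and>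
            b = (\<Sum>i\<in>{i. f i \<noteq> 0}. f i)"
  using G unfolding graded_algebra_def by blast

lemma Gint: "x \<in> G i \<Longrightarrow> of_int z * x \<in> G i"
  using Gsmult Kof_int by blast

lemma Gneg: "x \<in> G i \<Longrightarrow> - x \<in> G i"
  using Gint[of x i "-1"] by simp

lemma Gdiff: "x \<in> G i \<Longrightarrow> y \<in> G i \<Longrightarrow> x - y \<in> G i"
  using Gadd[of x i "-y"] Gneg by simp

lemma Gsum: "finite T \<Longrightarrow> (\<And>t. t \<in> T \<Longrightarrow> f t \<in> G i) \<Longrightarrow> sum f T \<in> G i"
  by (induction T rule: finite_induct) (auto intro: G0 Gadd)

lemma Gmult': "x \<in> G i \<Longrightarrow> y \<in> G j \<Longrightarrow> k = i + j \<Longrightarrow> x * y \<in> G k"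
  using Gmult by blast

definition comp :: "int \<Rightarrow> 'b \<Rightarrow> 'b" where
  "comp i b = (THE f. (\<forall>i. f i \<in> G i) \<and> finite {i. f i \<noteq> 0} \<and>
            b = (\<Sum>i\<in>{i. f i \<noteq> 0}. f i)) i"

definition supp :: "'b \<Rightarrow> int set" where
  "supp b = {i. comp i b \<noteq> 0}"

lemma comp_prop: "(\<forall>i. comp i b \<in> G i) \<and> finite (supp b) \<and> b = (\<Sum>i\<in>supp b. comp i b)"
proof -
  let ?P = "\<lambda>f. (\<forall>i. f i \<in> G i) \<and> finite {i. f i \<noteq> 0} \<and> b = (\<Sum>i\<in>{i. f i \<noteq> 0}. f i)"
  have "?P (THE f. ?P f)" using theI'[OF Gex[of b]] .
  then show ?thesis unfolding supp_def comp_def[abs_def] by simp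
qed

lemma comp_G: "comp i b \<in> G i" using comp_prop by blast
lemma supp_finite: "finite (supp b)" using comp_prop by blast
lemma comp_sum: "b = (\<Sum>i\<in>supp b. comp i b)" using comp_prop by blast

lemma comp_sum': "finite T \<Longrightarrow> supp b \<subseteq> T \<Longrightarrow> b = (\<Sum>i\<in>T. comp i b)"
proof -
  assume T: "finite T" and s: "supp b \<subseteq> T"
  have "b = (\<Sum>i\<in>supp b. comp i b)" by (rule comp_sum)
  also have "\<dots> = (\<Sum>i\<in>T. comp i b)"
    by (rule sum.mono_neutral_left[OF T s]) (auto simp: supp_def)
  finally show ?thesis .
qed

lemma comp_unique:
  assumes f: "\<And>i. f i \<in> G i" and T: "finite T" and z: "\<And>i. i \<notin> T \<Longrightarrow> f i = 0"
    and b: "b = (\<Sum>i\<in>T. f i)"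
  shows "comp i b = f i"
proof -
  let ?P = "\<lambda>f. (\<forall>i. f i \<in> G i) \<and> finite {i. f i \<noteq> 0} \<and> b = (\<Sum>i\<in>{i. f i \<noteq> 0}. f i)"
  have sub: "{i. f i \<noteq> 0} \<subseteq> T" using z by blast
  have fin: "finite {i. f i \<noteq> 0}" using sub T finite_subset by blast
  have "b = (\<Sum>i\<in>{i. f i \<noteq> 0}. f i)"
    unfolding b by (rule sum.mono_neutral_right[OF T sub]) auto
  then have "?P f" using f fin by blast
  then have "(THE f. ?P f) = f" by (rule the1_equality[OF Gex])
  then show ?thesis unfolding comp_def by simp
qed

lemma comp_homog: "y \<in> G j \<Longrightarrow> comp i y = (if i = j then y else 0)"
  by (rule comp_unique[where T="{j}"]) (auto intro: G0)

lemma comp_zero[simp]: "comp i 0 = 0"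
  using comp_homog[OF G0[of 0]] by simp

lemma comp_add: "comp i (a + b) = comp i a + comp i b"
proof -
  let ?T = "supp a \<union> supp b"
  have "a + b = (\<Sum>i\<in>?T. comp i a + comp i b)"
    using comp_sum'[of ?T a] comp_sum'[of ?T b] supp_finite by (simp add: sum.distrib)
  then show ?thesis
  proof (rule comp_unique[rotated 3])
    show "finite ?T" using supp_finite by simp
  qed (auto simp: supp_def intro: Gadd comp_G)
qed

lemma comp_sumf: "finite T \<Longrightarrow> comp i (sum g T) = (\<Sum>t\<in>T. comp i (g t))"
  by (induction T rule: finite_induct) (auto simp: comp_add)

lemma comp_neg: "comp i (- a) = - comp i a"
proof -
  have "comp i a + comp i (-a) = 0" using comp_add[of i a "-a"] by simp
  then show ?thesis by (metis add.inverse_unique)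
qed

lemma comp_diff: "comp i (a - b) = comp i a - comp i b"
  using comp_add[of i a "-b"] comp_neg by simp

lemma comp_mult_homog:
  assumes y: "y \<in> G j"
  shows "comp i (y * b) = y * comp (i - j) b"
proof -
  let ?T = "(\<lambda>k. k + j) ` supp b"
  have fin: "finite ?T" using supp_finite by simp
  have "y * b = (\<Sum>k\<in>supp b. y * comp k b)"
    by (subst comp_sum) (simp add: sum_distrib_left)
  also have "\<dots> = (\<Sum>k\<in>?T. y * comp (k - j) b)"
    by (subst sum.reindex) (auto simp: inj_on_def)
  finally have e: "y * b = (\<Sum>k\<in>?T. y * comp (k - j) b)" .
  show ?thesis
  proof (rule comp_unique[OF _ fin _ e])
    fix k show "y * comp (k - j) b \<in> G k" using Gmult'[OF y comp_G[of "k-j" b]] by simp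
  next
    fix k assume "k \<notin> ?T"
    then have "k - j \<notin> supp b" by (metis diff_add_cancel image_eqI)
    then show "y * comp (k - j) b = 0" by (simp add: supp_def)
  qed
qed

lemma comp_eq_zero_all: "(\<And>i. comp i b = 0) \<Longrightarrow> b = 0"
  using comp_sum[of b] by (simp add: supp_def)

lemma one_G0: "1 \<in> G 0"
proof -
  obtain y j where y: "y \<in> G j" "y \<noteq> 0"
  proof -
    have "(1::'b) = (\<Sum>i\<in>supp 1. comp i 1)" by (rule comp_sum)
    then obtain j where "comp j (1::'b) \<noteq> 0" by (metis comp_eq_zero_all one_neq_zero)
    then show ?thesis using that comp_G by blast
  qed
  have "\<forall>i. comp i (y * 1) = y * comp (i - j) 1" using comp_mult_homog[OF y(1)] by blast
  then have "\<forall>i. comp i y = y * comp (i - j) 1" by simp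
  then have h: "\<forall>i. (if i = j then y else 0) = y * comp (i - j) 1" using comp_homog[OF y(1)] by simp
  have c: "comp k (1::'b) = (if k = 0 then 1 else 0)" for k
  proof -
    have "(if k + j = j then y else 0) = y * comp k 1" using h[rule_format, of "k + j"] by simp
    then show ?thesis using y(2)
      by (cases "k = 0") (auto simp: mult.commute[of y] dest: mult_right_cancel[of y _ 1, THEN iffD1])
  qed
  have "(1::'b) = (\<Sum>i\<in>supp 1. comp i 1)" by (rule comp_sum)
  also have "supp (1::'b) = {0}" using c by (auto simp: supp_def)
  finally have "(1::'b) = comp 0 1" by simp
  then show ?thesis using comp_G by metis
qed

lemma Gpow: "x \<in> G i \<Longrightarrow> x ^ k \<in> G (int k * i)"
  by (induction k) (auto simp: one_G0 algebra_simps intro!: Gmult'[of x i])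

lemma K_G0: "c \<in> K \<Longrightarrow> c \<in> G 0"
  using Gsmult[OF _ one_G0] by fastforce

lemma Gof_int: "of_int z \<in> G 0"
  using K_G0 Kof_int by blast

end


locale der = gr +
  fixes D
  assumes der: "k_derivation K D" and ln: "locally_nilpotent D"
begin

lemma Dadd: "D (a + b) = D a + D b" and Dmult: "D (a * b) = a * D b + b * D a"
  and Dsmult: "c \<in> K \<Longrightarrow> D (c * a) = c * D a"
  using der unfolding k_derivation_def by auto

lemma D0[simp]: "D 0 = 0"
  using Dadd[of 0 0] by simp

lemma Dneg: "D (- a) = - D a"
proof -
  have "D a + D (-a) = 0" using Dadd[of a "-a"] by simp
  then show ?thesis by (metis add.inverse_unique)
qed

lemma Ddiff: "D (a - b) = D a - D b"
  using Dadd[of a "-b"] Dneg by simp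

lemma D1[simp]: "D 1 = 0"
  using Dmult[of 1 1] by simp

lemma DK: "c \<in> K \<Longrightarrow> D c = 0"
  using Dsmult[of c 1] by simp

lemma Dint: "D (of_int z * a) = of_int z * D a"
  using Dsmult Kof_int by blast

lemma Dnat: "D (of_nat z * a) = of_nat z * D a"
  using Dint[of "int z" a] by simp

lemma Dsum: "finite T \<Longrightarrow> D (sum f T) = (\<Sum>t\<in>T. D (f t))"
  by (induction T rule: finite_induct) (auto simp: Dadd)

lemma Dn0[simp]: "(D ^^ n) 0 = 0"
  by (induction n) auto

lemma Dnadd: "(D ^^ n) (a + b) = (D ^^ n) a + (D ^^ n) b"
  by (induction n) (auto simp: Dadd)

lemma Dnneg: "(D ^^ n) (- a) = - (D ^^ n) a"
  by (induction n) (auto simp: Dneg)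

lemma Dndiff: "(D ^^ n) (a - b) = (D ^^ n) a - (D ^^ n) b"
  by (induction n) (auto simp: Ddiff)

lemma Dnsum: "finite T \<Longrightarrow> (D ^^ n) (sum f T) = (\<Sum>t\<in>T. (D ^^ n) (f t))"
  by (induction T rule: finite_induct) (auto simp: Dnadd)

lemma Dn_ker_mult: "D u = 0 \<Longrightarrow> (D ^^ n) (u * v) = u * (D ^^ n) v"
  by (induction n) (auto simp: Dmult)

lemma Dnat_n: "(D ^^ n) (of_nat z * a) = of_nat z * (D ^^ n) a"
  by (rule Dn_ker_mult) (use DK Kof_int[of "int z"] in simp)

lemma Dn_Suc: "(D ^^ Suc n) b = (D ^^ n) (D b)"
  by (simp only: funpow_Suc_right o_def)

lemma Dn_more: "(D ^^ n) b = 0 \<Longrightarrow> n \<le> k \<Longrightarrow> (D ^^ k) b = 0"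
proof (induction k)
  case 0 then show ?case by simp
next
  case (Suc k) then show ?case by (cases "n = Suc k") auto
qed

lemma Dpow: "D (r ^ k) = of_nat k * r ^ (k - 1) * D r"
proof (induction k)
  case 0 then show ?case by simp
next
  case (Suc k)
  show ?case
  proof (cases k)
    case 0 then show ?thesis by simp
  next
    case (Suc j)
    then show ?thesis using Suc.IH by (simp add: Dmult algebra_simps)
  qed
qed

lemma leibniz_aux:
  "\<forall>m n u v. m + n = k \<longrightarrow> (D ^^ Suc m) u = 0 \<longrightarrow> (D ^^ Suc n) v = 0 \<longrightarrow>
     (D ^^ k) (u * v) = of_nat (k choose m) * (D ^^ m) u * (D ^^ n) v \<and> (D ^^ Suc k) (u * v) = 0"
proof (induction k)
  case 0
  show ?case
  proof (intro allI impI)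
    fix m n u v assume mn: "m + n = (0::nat)" and u: "(D ^^ Suc m) u = 0" and v: "(D ^^ Suc n) v = 0"
    then have "m = 0" "n = 0" by auto
    with u v show "(D ^^ 0) (u * v) = of_nat (0 choose m) * (D ^^ m) u * (D ^^ n) v \<and> (D ^^ Suc 0) (u * v) = 0"
      by (simp add: Dmult)
  qed
next
  case (Suc k)
  show ?case
  proof (intro allI impI)
    fix m n u v assume mn: "m + n = Suc k" and u: "(D ^^ Suc m) u = 0" and v: "(D ^^ Suc n) v = 0"
    show "(D ^^ Suc k) (u * v) = of_nat (Suc k choose m) * (D ^^ m) u * (D ^^ n) v \<and> (D ^^ Suc (Suc k)) (u * v) = 0"
    proof (cases "m = 0")
      case True
      then have Du: "D u = 0" using u by simp
      show ?thesis using True mn v by (simp add: Dn_ker_mult[OF Du] del: funpow.simps)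
    next
      case m: False
      show ?thesis
      proof (cases "n = 0")
        case True
        then have Dv: "D v = 0" using v by simp
        have "u * v = v * u" by (simp add: mult.commute)
        have "(D ^^ j) (u * v) = (D ^^ j) u * v" for j using Dn_ker_mult[OF Dv, of j u]
          by (simp add: mult.commute)
        then have a1: "(D ^^ Suc k) (u * v) = (D ^^ Suc k) u * v"
          and a2: "(D ^^ Suc (Suc k)) (u * v) = (D ^^ Suc (Suc k)) u * v" by blast+
        have "m = Suc k" using True mn by simp
        then show ?thesis using True a1 a2 u by (simp del: funpow.simps)
      next
        case n: False
        obtain m' where m': "m = Suc m'" using m by (cases m) auto
        obtain n' where n': "n = Suc n'" using n by (cases n) auto
        have v': "(D ^^ Suc n') (D v) = 0" using v n' by (simp add: Dn_Suc del: funpow.simps)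
        have u': "(D ^^ Suc m') (D u) = 0" using u m' by (simp add: Dn_Suc del: funpow.simps)
        have k1: "m + n' = k" using mn n' by simp
        have k2: "m' + n = k" using mn m' by simp
        note IH1 = Suc.IH[rule_format, OF k1 u v']
        note IH2 = Suc.IH[rule_format, OF k2 u' v]
        have e1: "(D ^^ Suc k) (u * v) = (D ^^ k) (u * D v) + (D ^^ k) (D u * v)"
          by (simp add: Dn_Suc Dmult Dnadd mult.commute del: funpow.simps)
        have e2: "(D ^^ Suc (Suc k)) (u * v) = (D ^^ Suc k) (u * D v) + (D ^^ Suc k) (D u * v)"
          by (simp only: Dn_Suc[of "Suc k"] Dmult Dnadd) (simp add: mult.commute)
        have "(D ^^ n') (D v) = (D ^^ n) v" using n' by (simp add: Dn_Suc del: funpow.simps)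
        moreover have "(D ^^ m') (D u) = (D ^^ m) u" using m' by (simp add: Dn_Suc del: funpow.simps)
        moreover have "(Suc k choose m) = (k choose m) + (k choose m')"
          using m' by simp
        ultimately have f1: "(D ^^ Suc k) (u * v) = of_nat (Suc k choose m) * (D ^^ m) u * (D ^^ n) v"
          using IH1 IH2 e1 by (simp add: algebra_simps del: funpow.simps)
        have f2: "(D ^^ Suc (Suc k)) (u * v) = 0"
          using e2 IH1 IH2 by (simp only: add_0_right)
        show ?thesis using f1 f2 by blast
      qed
    qed
  qed
qed

lemma leibniz:
  assumes "(D ^^ Suc m) u = 0" "(D ^^ Suc n) v = 0"
  shows "(D ^^ (m + n)) (u * v) = of_nat ((m + n) choose m) * (D ^^ m) u * (D ^^ n) v"
    and "(D ^^ Suc (m + n)) (u * v) = 0"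
  using leibniz_aux[of "m+n"] assms by blast+

definition nu where
  "nu b = (LEAST n. (D ^^ Suc n) b = 0)"

lemma nu_ex: "\<exists>n. (D ^^ Suc n) b = 0"
proof -
  obtain n where "(D ^^ n) b = 0" using ln unfolding locally_nilpotent_def by blast
  then have "(D ^^ Suc n) b = 0" by (rule Dn_more) simp
  then show ?thesis by blast
qed

lemma nu1: "(D ^^ Suc (nu b)) b = 0"
  unfolding nu_def using nu_ex by (rule LeastI_ex)

lemma nu2: "(D ^^ Suc k) b = 0 \<Longrightarrow> nu b \<le> k"
  unfolding nu_def by (rule Least_le)

lemma nu3: "b \<noteq> 0 \<Longrightarrow> (D ^^ nu b) b \<noteq> 0"
proof (cases "nu b")
  case 0 then show "b \<noteq> 0 \<Longrightarrow> ?thesis" by simp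
next
  case (Suc k)
  then show ?thesis using nu2[of k b] by auto
qed

lemma nu_eqI: "(D ^^ Suc k) b = 0 \<Longrightarrow> (D ^^ k) b \<noteq> 0 \<Longrightarrow> nu b = k"
proof -
  assume a: "(D ^^ Suc k) b = 0" "(D ^^ k) b \<noteq> 0"
  have "nu b \<le> k" using nu2 a by blast
  moreover have "\<not> nu b < k"
  proof
    assume "nu b < k"
    then have "(D ^^ k) b = 0" using Dn_more[OF nu1[of b]] by simp
    then show False using a by simp
  qed
  ultimately show ?thesis by simp
qed

lemma nu_zero_iff: "nu b = 0 \<longleftrightarrow> D b = 0"
  using nu1[of b] nu2[of 0 b] by auto

lemma nu_mult:
  assumes "u \<noteq> 0" "v \<noteq> 0"
  shows "nu (u * v) = nu u + nu v"
proof (rule nu_eqI)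
  show "(D ^^ Suc (nu u + nu v)) (u * v) = 0" using leibniz(2)[OF nu1 nu1] .
  have "(D ^^ (nu u + nu v)) (u * v) = of_nat ((nu u + nu v) choose nu u) * (D ^^ nu u) u * (D ^^ nu v) v"
    using leibniz(1)[OF nu1 nu1] .
  moreover have "of_nat ((nu u + nu v) choose nu u) * (D ^^ nu u) u * (D ^^ nu v) v \<noteq> 0"
    using nu3[OF assms(1)] nu3[OF assms(2)] by simp
  ultimately show "(D ^^ (nu u + nu v)) (u * v) \<noteq> 0" by simp
qed

lemma fact_closed:
  assumes "D (u * v) = 0" "u * v \<noteq> 0"
  shows "D u = 0"
proof -
  have "u \<noteq> 0" "v \<noteq> 0" using assms by auto
  then have "nu (u * v) = nu u + nu v" by (rule nu_mult)
  moreover have "nu (u * v) = 0" using assms nu_zero_iff by blast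
  ultimately show ?thesis using nu_zero_iff by simp
qed

lemma nu_pow: "r \<noteq> 0 \<Longrightarrow> nu (r ^ k) = k * nu r"
  by (induction k) (auto simp: nu_mult nu_zero_iff)

lemma Dn_ker_mult': "D u = 0 \<Longrightarrow> (D ^^ n) (v * u) = (D ^^ n) v * u"
  using Dn_ker_mult[of u n v] by (simp add: mult.commute)

end

locale hder = der +
  fixes h :: int
  assumes hom: "\<And>i. D ` G i \<subseteq> G (i + h)"
begin

lemma DG: "y \<in> G i \<Longrightarrow> D y \<in> G (i + h)"
  using hom by blast

lemma DnG: "y \<in> G i \<Longrightarrow> (D ^^ n) y \<in> G (i + int n * h)"
proof (induction n)
  case 0 then show ?case by simp
next
  case (Suc n)
  then show ?case using DG[of "(D ^^ n) y" "i + int n * h"] by (simp add: algebra_simps)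
qed

end



context hder
begin

lemma Dpow_ker: "D a = 0 \<Longrightarrow> D (a ^ k) = 0"
  using Dpow[of a k] by simp

lemma phi:
  assumes b: "b \<in> G e" and r: "r \<in> G \<rho>" and Dr: "D r = a" and Da: "D a = 0"
    and bm: "(D ^^ Suc m) b = 0"
  shows "\<exists>N \<phi> Y. N > (0::nat) \<and> D \<phi> = 0 \<and> \<phi> \<in> G (e + int m * (\<rho> + h)) \<and>
           Y \<in> G (e + int m * (\<rho> + h) - \<rho>) \<and> of_nat N * a ^ m * b = \<phi> + r * Y"
proof -
  define c :: "nat \<Rightarrow> 'a" where "c i = of_int ((-1) ^ i * int (\<Prod>{Suc i..m}))" for i
  define t where "t i = (D ^^ i) b * r ^ i * a ^ (m - i)" for i
  define A where "A i = (D ^^ Suc i) b * r ^ i * a ^ (m - i)" for i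
  define \<phi> where "\<phi> = (\<Sum>i\<le>m. c i * t i)"
  define Y where "Y = - (\<Sum>j<m. c (Suc j) * ((D ^^ Suc j) b * r ^ j * a ^ (m - Suc j)))"
  define N where "N = \<Prod>{Suc 0..m}"
  have aG: "a \<in> G (\<rho> + h)" using DG[OF r] Dr by simp
  have N0: "N > 0" unfolding N_def by (simp add: prod_pos)
  have cS: "c (Suc j) * of_nat (Suc j) = - c j" if "j < m" for j
  proof -
    have "\<Prod>{Suc j..m} = Suc j * \<Prod>{Suc (Suc j)..m}"
      using that by (subst prod.atLeast_Suc_atMost) auto
    then show ?thesis unfolding c_def by (simp add: algebra_simps)
  qed
  have c0: "c 0 = of_nat N" unfolding c_def N_def by simp
  have tS: "t (Suc j) = r * ((D ^^ Suc j) b * r ^ j * a ^ (m - Suc j))" for j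
    unfolding t_def by (simp add: algebra_simps)
  have phiY: "\<phi> = of_nat N * a ^ m * b - r * Y"
  proof -
    have "\<phi> = c 0 * t 0 + (\<Sum>j<m. c (Suc j) * t (Suc j))"
      unfolding \<phi>_def by (rule sum.atMost_shift)
    also have "(\<Sum>j<m. c (Suc j) * t (Suc j)) = - (r * Y)"
      unfolding Y_def tS by (simp add: sum_distrib_left algebra_simps)
    finally show ?thesis using c0 unfolding t_def by (simp add: algebra_simps)
  qed
  have Dt: "D (t i) = A i + (if i = 0 then 0 else of_nat i * A (i - 1))" if im: "i \<le> m" for i
  proof -
    have f1: "D (t i) = (D ^^ Suc i) b * r ^ i * a ^ (m - i) + (D ^^ i) b * (of_nat i * r ^ (i - 1) * a) * a ^ (m - i)"
      unfolding t_def using Dpow_ker[OF Da, of "m - i"] Dpow[of r i] Dr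
      by (simp add: Dmult algebra_simps)
    have f2: "(D ^^ i) b * (of_nat i * r ^ (i - 1) * a) * a ^ (m - i) = of_nat i * A (i - 1)" if "i \<noteq> 0" "i \<le> m"
    proof -
      obtain j where j: "i = Suc j" using \<open>i \<noteq> 0\<close> by (cases i) auto
      have "a * a ^ (m - Suc j) = a ^ (m - j)" using that j
        by (metis Suc_diff_Suc Suc_le_lessD power_Suc)
      then show ?thesis unfolding A_def using j
        by (simp add: algebra_simps del: funpow.simps) (metis mult.left_commute)
    qed
    have f3: "D (t i) = A i + (D ^^ i) b * (of_nat i * r ^ (i - 1) * a) * a ^ (m - i)"
      using f1 unfolding A_def by simp
    show ?thesis
    proof (cases "i = 0")
      case True then show ?thesis using f3 by simp
    next
      case False then show ?thesis using f3 f2[OF False im] by simp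
    qed
  qed
  have Dphi: "D \<phi> = 0"
  proof -
    have "D \<phi> = (\<Sum>i\<le>m. c i * D (t i))"
    proof -
      have "D (c i * y) = c i * D y" for i y unfolding c_def by (rule Dint)
      then show ?thesis unfolding \<phi>_def by (simp add: Dsum)
    qed
    also have "\<dots> = (\<Sum>i\<le>m. c i * A i) + (\<Sum>i\<le>m. c i * (if i = 0 then 0 else of_nat i * A (i - 1)))"
      by (simp add: Dt distrib_left sum.distrib)
    also have "(\<Sum>i\<le>m. c i * (if i = 0 then 0 else of_nat i * A (i - 1))) = (\<Sum>j<m. c (Suc j) * (of_nat (Suc j) * A j))"
      by (subst sum.atMost_shift) simp
    also have "\<dots> = (\<Sum>j<m. - (c j * A j))"
      by (rule sum.cong) (use cS in \<open>auto simp: mult.assoc[symmetric]\<close>)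
    also have "(\<Sum>i\<le>m. c i * A i) = (\<Sum>j<m. c j * A j) + c m * A m"
      by (simp add: lessThan_Suc_atMost[symmetric])
    also have "A m = 0" unfolding A_def using bm by simp
    finally show ?thesis by (simp add: sum_negf)
  qed
  have tG: "t i \<in> G (e + int m * (\<rho> + h))" if "i \<le> m" for i
  proof -
    have "t i \<in> G ((e + int i * h) + int i * \<rho> + int (m - i) * (\<rho> + h))"
      unfolding t_def by (intro Gmult Gpow DnG b r aG)
    moreover have "(e + int i * h) + int i * \<rho> + int (m - i) * (\<rho> + h) = e + int m * (\<rho> + h)"
      using that by (simp add: of_nat_diff algebra_simps)
    ultimately show ?thesis by simp
  qed
  have phiG: "\<phi> \<in> G (e + int m * (\<rho> + h))"
    unfolding \<phi>_def c_def by (intro Gsum Gint tG) auto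
  have YG: "Y \<in> G (e + int m * (\<rho> + h) - \<rho>)"
  proof -
    have "(D ^^ Suc j) b * r ^ j * a ^ (m - Suc j) \<in> G (e + int m * (\<rho> + h) - \<rho>)" if "j < m" for j
    proof -
      have "(D ^^ Suc j) b * r ^ j * a ^ (m - Suc j) \<in> G ((e + int (Suc j) * h) + int j * \<rho> + int (m - Suc j) * (\<rho> + h))"
        by (intro Gmult Gpow DnG b r aG)
      moreover have "(e + int (Suc j) * h) + int j * \<rho> + int (m - Suc j) * (\<rho> + h) = e + int m * (\<rho> + h) - \<rho>"
        using that by (simp add: of_nat_diff algebra_simps)
      ultimately show ?thesis by metis
    qed
    then show ?thesis unfolding Y_def c_def by (intro Gneg Gsum Gint) auto
  qed
  show ?thesis
    by (rule exI[of _ N], rule exI[of _ \<phi>], rule exI[of _ Y]) (use N0 Dphi phiG YG phiY in auto)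
qed

end


lemma isg_mem: "s \<in> S \<Longrightarrow> s \<in> int_subgroup_gen S"
  unfolding int_subgroup_gen_def
  by (rule CollectI, rule exI[of _ "{s}"], rule exI[of _ "\<lambda>_. 1"]) simp

lemma isg_zero: "0 \<in> int_subgroup_gen S"
  unfolding int_subgroup_gen_def by (rule CollectI, rule exI[of _ "{}"]) simp

lemma isg_add:
  assumes "x \<in> int_subgroup_gen S" "y \<in> int_subgroup_gen S"
  shows "x + y \<in> int_subgroup_gen S"
proof -
  obtain F1 c1 where 1: "finite F1" "F1 \<subseteq> S" "x = (\<Sum>i\<in>F1. c1 i * i)"
    using assms(1) unfolding int_subgroup_gen_def mem_Collect_eq by (elim exE conjE)
  obtain F2 c2 where 2: "finite F2" "F2 \<subseteq> S" "y = (\<Sum>i\<in>F2. c2 i * i)"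
    using assms(2) unfolding int_subgroup_gen_def mem_Collect_eq by (elim exE conjE)
  define d1 where "d1 i = (if i \<in> F1 then c1 i else 0)" for i
  define d2 where "d2 i = (if i \<in> F2 then c2 i else 0)" for i
  define c where "c i = d1 i + d2 i" for i
  have fin: "finite (F1 \<union> F2)" using 1 2 by simp
  have s1: "(\<Sum>i\<in>F1 \<union> F2. d1 i * i) = x"
  proof -
    have "(\<Sum>i\<in>F1 \<union> F2. d1 i * i) = (\<Sum>i\<in>F1. d1 i * i)"
      by (rule sum.mono_neutral_right[OF fin]) (auto simp: d1_def)
    also have "\<dots> = x" unfolding 1(3) by (rule sum.cong) (auto simp: d1_def)
    finally show ?thesis .
  qed
  have s2: "(\<Sum>i\<in>F1 \<union> F2. d2 i * i) = y"
  proof -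
    have "(\<Sum>i\<in>F1 \<union> F2. d2 i * i) = (\<Sum>i\<in>F2. d2 i * i)"
      by (rule sum.mono_neutral_right[OF fin]) (auto simp: d2_def)
    also have "\<dots> = y" unfolding 2(3) by (rule sum.cong) (auto simp: d2_def)
    finally show ?thesis .
  qed
  have "(\<Sum>i\<in>F1 \<union> F2. c i * i) = x + y"
    unfolding c_def distrib_right sum.distrib s1 s2 ..
  moreover have "F1 \<union> F2 \<subseteq> S" using 1 2 by simp
  ultimately show ?thesis unfolding int_subgroup_gen_def mem_Collect_eq
    by (intro exI[of _ "F1 \<union> F2"] exI[of _ c]) (use fin in simp)
qed

lemma isg_mult:
  assumes "x \<in> int_subgroup_gen S"
  shows "k * x \<in> int_subgroup_gen S"
proof -
  obtain F c where 1: "finite F" "F \<subseteq> S" "x = (\<Sum>i\<in>F. c i * i)"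
    using assms unfolding int_subgroup_gen_def mem_Collect_eq by (elim exE conjE)
  then have "k * x = (\<Sum>i\<in>F. (k * c i) * i)" by (simp add: sum_distrib_left algebra_simps)
  then show ?thesis unfolding int_subgroup_gen_def mem_Collect_eq
    by (intro exI[of _ F] exI[of _ "\<lambda>i. k * c i"]) (use 1 in simp)
qed

lemma isg_neg: "x \<in> int_subgroup_gen S \<Longrightarrow> - x \<in> int_subgroup_gen S"
  using isg_mult[of x S "-1"] by simp

lemma isg_diff: "x \<in> int_subgroup_gen S \<Longrightarrow> y \<in> int_subgroup_gen S \<Longrightarrow> x - y \<in> int_subgroup_gen S"
  using isg_add[of x S "-y"] isg_neg by simp

lemma isg_sum: "finite F \<Longrightarrow> (\<And>i. i \<in> F \<Longrightarrow> f i \<in> int_subgroup_gen S) \<Longrightarrow> sum f F \<in> int_subgroup_gen S"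
  by (induction F rule: finite_induct) (auto intro: isg_zero isg_add)

lemma isg_sub:
  assumes "T \<subseteq> int_subgroup_gen S"
  shows "int_subgroup_gen T \<subseteq> int_subgroup_gen S"
proof
  fix x assume "x \<in> int_subgroup_gen T"
  then obtain F c where 1: "finite F" "F \<subseteq> T" "x = (\<Sum>i\<in>F. c i * i)"
    unfolding int_subgroup_gen_def mem_Collect_eq by (elim exE conjE)
  show "x \<in> int_subgroup_gen S" unfolding 1(3)
    by (rule isg_sum[OF 1(1)]) (use 1(2) assms in \<open>auto intro: isg_mult\<close>)
qed

lemma isg_mono: "T \<subseteq> S \<Longrightarrow> int_subgroup_gen T \<subseteq> int_subgroup_gen S"
  by (rule isg_sub) (auto intro: isg_mem)

lemma isg_Gcd: "finite S \<Longrightarrow> Gcd S \<in> int_subgroup_gen (S::int set)"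
proof (induction S rule: finite_induct)
  case empty then show ?case by (simp add: isg_zero)
next
  case (insert a S)
  obtain u v where uv: "u * a + v * Gcd S = gcd a (Gcd S)" using bezout_int by blast
  have "Gcd S \<in> int_subgroup_gen (insert a S)" using insert.IH isg_mono[of S "insert a S"] by blast
  moreover have "a \<in> int_subgroup_gen (insert a S)" by (rule isg_mem) simp
  ultimately have "u * a + v * Gcd S \<in> int_subgroup_gen (insert a S)"
    by (intro isg_add isg_mult)
  then show ?case using uv by simp
qed

context gr
begin

lemma degZ_mem: "y \<in> A \<Longrightarrow> y \<in> G i \<Longrightarrow> y \<noteq> 0 \<Longrightarrow> i \<in> degZ G A"
  unfolding degZ_def by (rule isg_mem) blast

lemma degZ_mono: "A \<subseteq> B \<Longrightarrow> degZ G A \<subseteq> degZ G B"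
  unfolding degZ_def by (rule isg_mono) blast

end

context hder
begin

lemma kerD: "y \<in> ker D \<longleftrightarrow> D y = 0" unfolding ker_def by simp

lemma slice:
  assumes "\<exists>b. D b \<noteq> 0"
  shows "\<exists>r \<rho>. r \<in> G \<rho> \<and> D r \<noteq> 0 \<and> D (D r) = 0"
proof -
  obtain b where b: "D b \<noteq> 0" using assms by blast
  have "D b = (\<Sum>i\<in>supp b. D (comp i b))"
    by (subst comp_sum) (simp add: Dsum supp_finite)
  then obtain i where i: "D (comp i b) \<noteq> 0" using b by (metis sum.neutral)
  define y where "y = comp i b"
  have yG: "y \<in> G i" unfolding y_def by (rule comp_G)
  have y0: "y \<noteq> 0" using i unfolding y_def by auto
  have nu0: "nu y \<noteq> 0" using i nu_zero_iff unfolding y_def by blast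
  then obtain k where k: "nu y = Suc k" by (cases "nu y") auto
  define r where "r = (D ^^ k) y"
  have "r \<in> G (i + int k * h)" unfolding r_def by (rule DnG[OF yG])
  moreover have "D r \<noteq> 0" using nu3[OF y0] k unfolding r_def by simp
  moreover have "D (D r) = 0" using nu1[of y] k unfolding r_def by simp
  ultimately show ?thesis by blast
qed

lemma nu_slice:
  assumes "D r \<noteq> 0" "D (D r) = 0"
  shows "nu r = 1"
  using nu_eqI[of 1 r] assms by simp

lemma prime_div_slice:
  assumes r: "r \<in> G \<rho>" and Dr0: "D r \<noteq> 0" and DDr: "D (D r) = 0"
    and x: "x \<in> G e" and xp: "prime_elem x" and e: "e \<notin> degZ G (ker D)"
  shows "\<exists>u. r = x * u \<and> D u = 0 \<and> u \<noteq> 0"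
proof -
  define a where "a = D r"
  have aG: "a \<in> G (\<rho> + h)" using DG[OF r] unfolding a_def .
  have a0: "a \<noteq> 0" and Da: "D a = 0" using Dr0 DDr unfolding a_def by auto
  have x0: "x \<noteq> 0" using xp by auto
  have Dx: "D x \<noteq> 0"
  proof
    assume "D x = 0"
    then have "e \<in> degZ G (ker D)" using degZ_mem[of x "ker D" e] x x0 by (simp add: kerD)
    then show False using e by simp
  qed
  have ah: "\<rho> + h \<in> degZ G (ker D)" using degZ_mem[of a "ker D"] aG a0 Da by (simp add: kerD)
  obtain N \<phi> Y where N: "N > 0" and D\<phi>: "D \<phi> = 0" and \<phi>G: "\<phi> \<in> G (e + int (nu x) * (\<rho> + h))"
    and YG: "Y \<in> G (e + int (nu x) * (\<rho> + h) - \<rho>)"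
    and eq: "of_nat N * a ^ nu x * x = \<phi> + r * Y"
    using phi[OF x r a_def[symmetric] Da nu1[of x]] by blast
  have \<phi>0: "\<phi> = 0"
  proof (rule ccontr)
    assume "\<phi> \<noteq> 0"
    then have "e + int (nu x) * (\<rho> + h) \<in> degZ G (ker D)"
      using degZ_mem[of \<phi> "ker D"] \<phi>G D\<phi> by (simp add: kerD)
    moreover have "int (nu x) * (\<rho> + h) \<in> degZ G (ker D)"
      using ah unfolding degZ_def by (rule isg_mult)
    ultimately have "(e + int (nu x) * (\<rho> + h)) - int (nu x) * (\<rho> + h) \<in> degZ G (ker D)"
      unfolding degZ_def by (rule isg_diff)
    then show False using e by simp
  qed
  have eq2: "of_nat N * a ^ nu x * x = r * Y" using eq \<phi>0 by simp
  have "x dvd r * Y" unfolding eq2[symmetric] by simp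
  then have "x dvd r \<or> x dvd Y" using xp prime_elem_dvd_mult_iff by blast
  moreover have "\<not> x dvd Y"
  proof
    assume "x dvd Y"
    then obtain y' where Y: "Y = x * y'" by (auto elim: dvdE)
    have "of_nat N * a ^ nu x * x = (r * y') * x" using eq2 Y by (simp add: algebra_simps)
    then have e3: "of_nat N * a ^ nu x = r * y'" using x0 by simp
    have "D (r * y') = 0" unfolding e3[symmetric] using Dnat[of N "a ^ nu x"] Dpow_ker[OF Da] by simp
    moreover have "r * y' \<noteq> 0" unfolding e3[symmetric] using N a0 by simp
    ultimately have "D r = 0" by (rule fact_closed)
    then show False using Dr0 by simp
  qed
  ultimately obtain u where u: "r = x * u" by (auto elim: dvdE)
  have r0: "r \<noteq> 0" using Dr0 by auto
  then have u0: "u \<noteq> 0" using u by auto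
  have "nu r = nu x + nu u" using nu_mult[OF x0 u0] u by simp
  moreover have "nu r = 1" using nu_slice[OF Dr0 DDr] .
  moreover have "nu x \<noteq> 0" using Dx nu_zero_iff by blast
  ultimately have "nu u = 0" by simp
  then have "D u = 0" using nu_zero_iff by blast
  then show ?thesis using u u0 by blast
qed

lemma partA:
  assumes xprime: "\<forall>i\<in>{1..n}. prime_elem (x i)"
    and xdeg: "\<forall>i\<in>{1..n}. x i \<in> G (d i)"
    and gen: "int_subgroup_gen (d ` {1..n}) = degZ G UNIV"
    and type0: "type_seq n d = 0"
    and nonassoc: "\<forall>i\<in>{1..n}. \<forall>j\<in>{1..n}. i \<noteq> j \<longrightarrow> \<not> (x i dvd x j \<and> x j dvd x i)"
  shows "degZ G (ker D) = degZ G UNIV"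
proof (cases "\<exists>b. D b \<noteq> 0")
  case False
  then have "ker D = UNIV" unfolding ker_def by auto
  then show ?thesis by simp
next
  case True
  obtain r \<rho> where r: "r \<in> G \<rho>" and Dr0: "D r \<noteq> 0" and DDr: "D (D r) = 0"
    using slice[OF True] by blast
  let ?Z = "degZ G (ker D)"
  have key: "\<exists>u. r = x i * u \<and> D u = 0 \<and> u \<noteq> 0" if "i \<in> {1..n}" "d i \<notin> ?Z" for i
    using prime_div_slice[OF r Dr0 DDr, of "x i" "d i"] that xprime xdeg by blast
  have inZ: "D (x j) \<noteq> 0" if "j \<in> {1..n}" "d j \<notin> ?Z" for j
  proof
    assume "D (x j) = 0"
    moreover have "x j \<noteq> 0" using xprime that(1) prime_elem_def by blast
    ultimately have "d j \<in> ?Z" using degZ_mem[of "x j" "ker D" "d j"] xdeg that by (simp add: kerD)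
    then show False using that by simp
  qed
  have one: "i = j" if A: "i \<in> {1..n}" "j \<in> {1..n}" "d i \<notin> ?Z" "d j \<notin> ?Z" for i j
  proof (rule ccontr)
    assume ij: "i \<noteq> j"
    obtain ui where ui: "r = x i * ui" "D ui = 0" "ui \<noteq> 0" using key A(1,3) by blast
    obtain uj where uj: "r = x j * uj" "D uj = 0" "uj \<noteq> 0" using key A(2,4) by blast
    have dv: "x j dvd x i" if "i \<in> {1..n}" "j \<in> {1..n}" "d j \<notin> ?Z"
       "r = x i * ui" "D ui = 0" "ui \<noteq> 0" for i j ui
    proof -
      have "x j dvd r" using key[OF that(2,3)] by (auto intro: dvdI)
      then have "x j dvd x i \<or> x j dvd ui" using that(4) xprime that(2) prime_elem_dvd_mult_iff by metis
      moreover have "\<not> x j dvd ui"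
      proof
        assume "x j dvd ui"
        then obtain w where w: "ui = x j * w" by (auto elim: dvdE)
        have "D (x j) = 0" using fact_closed[of "x j" w] w that by simp
        then show False using inZ that by blast
      qed
      ultimately show ?thesis by blast
    qed
    have "x j dvd x i" using dv[OF A(1,2,4) ui] .
    moreover have "x i dvd x j" using dv[OF A(2,1,3) uj] .
    ultimately show False using nonassoc A ij by blast
  qed
  have J: "Jstar n d = {}"
  proof -
    have "finite (Jstar n d)" unfolding Jstar_def by simp
    then show ?thesis using type0 unfolding type_seq_def by simp
  qed
  have gcdeq: "Gcd (d ` ({1..n} - {i})) = Gcd (d ` {1..n})" if "i \<in> {1..n}" for i
    using J that unfolding Jstar_def by blast
  have allZ: "d i \<in> ?Z" if i: "i \<in> {1..n}" for i
  proof (rule ccontr)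
    assume ni: "d i \<notin> ?Z"
    have others: "d ` ({1..n} - {i}) \<subseteq> ?Z" using one[OF i _ ni] by blast
    have "Gcd (d ` ({1..n} - {i})) \<in> int_subgroup_gen (d ` ({1..n} - {i}))"
      by (rule isg_Gcd) simp
    then have g: "Gcd (d ` ({1..n} - {i})) \<in> ?Z"
      using isg_sub[OF others[unfolded degZ_def]] unfolding degZ_def by blast
    have "Gcd (d ` {1..n}) dvd d i" using i by (intro Gcd_dvd) simp
    then obtain k where "d i = Gcd (d ` ({1..n} - {i})) * k" using gcdeq[OF i] by (auto elim: dvdE)
    then have "d i = k * Gcd (d ` ({1..n} - {i}))" by simp
    then have "d i \<in> ?Z" using isg_mult[OF g[unfolded degZ_def], of k] unfolding degZ_def by simp
    then show False using ni by simp
  qed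
  have "degZ G UNIV \<subseteq> ?Z"
    unfolding gen[symmetric] using allZ isg_sub[of "d ` {1..n}" "{i. \<exists>a\<in>ker D \<inter> G i. a \<noteq> 0}"]
    unfolding degZ_def by blast
  moreover have "?Z \<subseteq> degZ G UNIV" by (rule degZ_mono) simp
  ultimately show ?thesis by blast
qed

end


lemma funpow_additive:
  fixes E :: "'a::comm_ring_1 \<Rightarrow> 'a"
  assumes "\<And>a b. E (a + b) = E a + E b"
  shows "(E ^^ n) (a + b) = (E ^^ n) a + (E ^^ n) (b::'a::comm_ring_1)"
  by (induction n) (auto simp: assms)

lemma additive_zero:
  fixes E :: "'a::comm_ring_1 \<Rightarrow> 'a"
  assumes "\<And>a b. E (a + b) = E a + E b"
  shows "E (0::'a::comm_ring_1) = 0"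
proof -
  have "E 0 = E 0 + E 0" using assms[of 0 0] by simp
  then show ?thesis by simp
qed

lemma funpow_zero:
  fixes E :: "'a::comm_ring_1 \<Rightarrow> 'a"
  assumes "\<And>a b. E (a + b) = E a + E b"
  shows "(E ^^ n) (0::'a::comm_ring_1) = 0"
  by (induction n) (auto simp: additive_zero[OF assms])

lemma funpow_more:
  fixes E :: "'a::comm_ring_1 \<Rightarrow> 'a"
  assumes "\<And>a b. E (a + b) = E a + E b" "(E ^^ n) b = (0::'a::comm_ring_1)" "n \<le> k"
  shows "(E ^^ k) b = 0"
proof -
  obtain j where "k = j + n" using assms(3) le_Suc_ex by (metis add.commute)
  then show ?thesis using assms(2) funpow_zero[OF assms(1)] by (simp add: funpow_add)
qed

lemma nilp_add:
  fixes E :: "'a::comm_ring_1 \<Rightarrow> 'a"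
  assumes "\<And>a b. E (a + b) = E a + E b" "(E ^^ n) a = 0" "(E ^^ m) b = (0::'a::comm_ring_1)"
  shows "(E ^^ max n m) (a + b) = 0"
  using funpow_more[OF assms(1,2), of "max n m"] funpow_more[OF assms(1,3), of "max n m"]
  by (simp add: funpow_additive[OF assms(1)])

lemma nilp_sum:
  fixes E :: "'a::comm_ring_1 \<Rightarrow> 'a"
  assumes "\<And>a b. E (a + b) = E a + E b" "finite F" "\<And>t. t \<in> F \<Longrightarrow> \<exists>n. (E ^^ n) (f t) = (0::'a::comm_ring_1)"
  shows "\<exists>n. (E ^^ n) (sum f F) = 0"
  using assms(2,3)
proof (induction F rule: finite_induct)
  case empty
  have "(E ^^ 0) 0 = 0" by simp
  then show ?case by (metis sum.empty)
next
  case (insert t F)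
  then obtain n m where nm: "(E ^^ n) (f t) = 0" "(E ^^ m) (sum f F) = 0" by blast
  have "(E ^^ max n m) (f t + sum f F) = 0" by (rule nilp_add[OF assms(1) nm])
  moreover have "sum f (insert t F) = f t + sum f F" using insert(1,2) by simp
  ultimately show ?case by metis
qed

context gr
begin

lemma alg_gen_least:
  "K \<subseteq> A \<Longrightarrow> S \<subseteq> A \<Longrightarrow> (\<forall>x\<in>A. \<forall>y\<in>A. x + y \<in> A \<and> x * y \<in> A) \<Longrightarrow> alg_gen K S \<subseteq> A"
  unfolding alg_gen_def by blast

lemma alg_gen_K: "K \<subseteq> alg_gen K S" unfolding alg_gen_def by blast
lemma alg_gen_S: "S \<subseteq> alg_gen K S" unfolding alg_gen_def by blast
lemma alg_gen_add: "x \<in> alg_gen K S \<Longrightarrow> y \<in> alg_gen K S \<Longrightarrow> x + y \<in> alg_gen K S"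
  unfolding alg_gen_def by blast
lemma alg_gen_mult: "x \<in> alg_gen K S \<Longrightarrow> y \<in> alg_gen K S \<Longrightarrow> x * y \<in> alg_gen K S"
  unfolding alg_gen_def by blast

lemma alg_gen_sum: "finite F \<Longrightarrow> (\<And>t. t \<in> F \<Longrightarrow> f t \<in> alg_gen K S) \<Longrightarrow> sum f F \<in> alg_gen K S"
  by (induction F rule: finite_induct) (use alg_gen_K K0 in \<open>auto intro: alg_gen_add\<close>)

lemma der_zero_gen:
  assumes E: "k_derivation K E" and S: "alg_gen K S = UNIV" and z: "\<And>s. s \<in> S \<Longrightarrow> E s = 0"
  shows "E b = 0"
proof -
  have add: "E (a + b) = E a + E b" and mult: "E (a * b) = a * E b + b * E a"
    and sm: "c \<in> K \<Longrightarrow> E (c * a) = c * E a" for a b c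
    using E unfolding k_derivation_def by auto
  have E1: "E 1 = 0" using mult[of 1 1] by simp
  have "alg_gen K S \<subseteq> {b. E b = 0}"
  proof (rule alg_gen_least)
    show "K \<subseteq> {b. E b = 0}" using sm[of _ 1] E1 by auto
    show "S \<subseteq> {b. E b = 0}" using z by auto
    show "\<forall>x\<in>{b. E b = 0}. \<forall>y\<in>{b. E b = 0}. x + y \<in> {b. E b = 0} \<and> x * y \<in> {b. E b = 0}"
      using add mult by auto
  qed
  then show ?thesis using S by auto
qed

lemma homog_gens:
  assumes "finite S" "alg_gen K S = UNIV"
  shows "alg_gen K ((\<lambda>(s, i). comp i s) ` Sigma S supp) = UNIV" (is "alg_gen K ?S' = _")
proof -
  have "S \<subseteq> alg_gen K ?S'"
  proof
    fix s assume s: "s \<in> S"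
    have "s = (\<Sum>i\<in>supp s. comp i s)" by (rule comp_sum)
    also have "\<dots> \<in> alg_gen K ?S'"
    proof (rule alg_gen_sum[OF supp_finite])
      fix t assume t: "t \<in> supp s"
      have "comp t s \<in> ?S'" using s t by (intro image_eqI[of _ _ "(s,t)"]) auto
      then show "comp t s \<in> alg_gen K ?S'" using alg_gen_S by (rule subsetD[rotated])
    qed
    finally show "s \<in> alg_gen K ?S'" .
  qed
  then have "alg_gen K S \<subseteq> alg_gen K ?S'"
  proof (rule alg_gen_least[OF alg_gen_K])
    show "\<forall>x\<in>alg_gen K ?S'. \<forall>y\<in>alg_gen K ?S'. x + y \<in> alg_gen K ?S' \<and> x * y \<in> alg_gen K ?S'"
      using alg_gen_add alg_gen_mult by blast
  qed
  then show ?thesis using assms by auto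
qed

end

context der
begin

definition Dp where "Dp p b = (\<Sum>i\<in>supp b. comp (i + p) (D (comp i b)))"

lemma Dp_T: "finite T \<Longrightarrow> supp b \<subseteq> T \<Longrightarrow> Dp p b = (\<Sum>i\<in>T. comp (i + p) (D (comp i b)))"
  unfolding Dp_def by (rule sum.mono_neutral_left) (auto simp: supp_def)

lemma Dp_homog: "y \<in> G j \<Longrightarrow> Dp p y = comp (j + p) (D y)"
proof -
  assume y: "y \<in> G j"
  have "supp y \<subseteq> {j}" using comp_homog[OF y] by (auto simp: supp_def split: if_splits)
  then have "Dp p y = (\<Sum>i\<in>{j}. comp (i + p) (D (comp i y)))" by (intro Dp_T) auto
  then show ?thesis using comp_homog[OF y] by simp
qed

lemma Dp_add: "Dp p (a + b) = Dp p a + Dp p b"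
proof -
  let ?T = "supp a \<union> supp b \<union> supp (a + b)"
  have fin: "finite ?T" by (simp add: supp_finite)
  have 1: "Dp p a = (\<Sum>i\<in>?T. comp (i + p) (D (comp i a)))" by (rule Dp_T[OF fin]) blast
  have 2: "Dp p b = (\<Sum>i\<in>?T. comp (i + p) (D (comp i b)))" by (rule Dp_T[OF fin]) blast
  have 3: "Dp p (a + b) = (\<Sum>i\<in>?T. comp (i + p) (D (comp i (a + b))))" by (rule Dp_T[OF fin]) blast
  show ?thesis unfolding 1 2 3 by (simp add: comp_add Dadd sum.distrib)
qed

lemma Dp_zero[simp]: "Dp p 0 = 0"
  using Dp_add[of p 0 0] by simp

lemma Dp_sum: "finite F \<Longrightarrow> Dp p (sum f F) = (\<Sum>t\<in>F. Dp p (f t))"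
  by (induction F rule: finite_induct) (auto simp: Dp_add)

lemma Dp_G: "y \<in> G i \<Longrightarrow> Dp p y \<in> G (i + p)"
  using Dp_homog comp_G by simp

lemma Dp_leib_homog:
  assumes y: "y \<in> G i" and z: "z \<in> G j"
  shows "Dp p (y * z) = y * Dp p z + z * Dp p y"
proof -
  have "Dp p (y * z) = comp (i + j + p) (D (y * z))" using Dp_homog[OF Gmult[OF y z]] .
  also have "\<dots> = y * comp (j + p) (D z) + z * comp (i + p) (D y)"
    by (simp add: Dmult comp_add comp_mult_homog[OF y] comp_mult_homog[OF z] algebra_simps)
  also have "\<dots> = y * Dp p z + z * Dp p y" using Dp_homog[OF y] Dp_homog[OF z] by simp
  finally show ?thesis .
qed

lemma Dp_leib: "Dp p (y * z) = y * Dp p z + z * Dp p y"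
proof -
  have yz: "y * z = (\<Sum>i\<in>supp y. \<Sum>j\<in>supp z. comp i y * comp j z)"
    by (subst comp_sum[of y], subst comp_sum[of z]) (rule sum_product)
  have Dy: "Dp p y = (\<Sum>i\<in>supp y. Dp p (comp i y))"
    by (subst comp_sum[of y]) (simp add: Dp_sum supp_finite)
  have Dz: "Dp p z = (\<Sum>j\<in>supp z. Dp p (comp j z))"
    by (subst comp_sum[of z]) (simp add: Dp_sum supp_finite)
  have "Dp p (y * z) = (\<Sum>i\<in>supp y. \<Sum>j\<in>supp z. Dp p (comp i y * comp j z))"
    unfolding yz by (simp add: Dp_sum supp_finite)
  also have "\<dots> = (\<Sum>i\<in>supp y. \<Sum>j\<in>supp z. comp i y * Dp p (comp j z) + comp j z * Dp p (comp i y))"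
    by (intro sum.cong refl) (rule Dp_leib_homog[OF comp_G comp_G])
  also have "\<dots> = (\<Sum>i\<in>supp y. comp i y * Dp p z) + (\<Sum>j\<in>supp z. comp j z * Dp p y)"
    unfolding Dy Dz sum.distrib sum_distrib_left
    by (subst sum.swap[of _ "supp y" "supp z"]) simp
  also have "\<dots> = y * Dp p z + z * Dp p y"
    by (subst (3) comp_sum[of y], subst (3) comp_sum[of z]) (simp add: sum_distrib_right)
  finally show ?thesis .
qed

lemma Dp_K: "c \<in> K \<Longrightarrow> Dp p c = 0"
  using Dp_homog[OF K_G0] DK by simp

lemma Dp_der: "k_derivation K (Dp p)"
  unfolding k_derivation_def using Dp_add Dp_leib Dp_K by (simp add: Dp_leib)

lemma comp_D_T:
  assumes "finite T" "supp y \<subseteq> T"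
  shows "comp k (D y) = (\<Sum>i\<in>T. Dp (k - i) (comp i y))"
proof -
  have "D y = (\<Sum>i\<in>T. D (comp i y))" by (subst comp_sum'[OF assms]) (simp add: Dsum assms)
  then have "comp k (D y) = (\<Sum>i\<in>T. comp k (D (comp i y)))" by (simp add: comp_sumf assms)
  also have "\<dots> = (\<Sum>i\<in>T. Dp (k - i) (comp i y))"
    by (rule sum.cong) (simp_all add: Dp_homog[OF comp_G])
  finally show ?thesis .
qed

end



context der
begin

lemma top_step:
  assumes q: "\<And>p b. p > q \<Longrightarrow> Dp p b = 0" and top: "\<And>k. k > e \<Longrightarrow> comp k y = 0"
  shows "(\<forall>k>e+q. comp k (D y) = 0) \<and> comp (e+q) (D y) = Dp q (comp e y)"
proof -
  let ?T = "insert e (supp y)"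
  have fin: "finite ?T" by (simp add: supp_finite)
  have le: "i \<le> e" if "i \<in> ?T" for i
    using that top[of i] by (auto simp: supp_def not_less[symmetric])
  have 1: "comp k (D y) = (\<Sum>i\<in>?T. Dp (k - i) (comp i y))" for k
    by (rule comp_D_T[OF fin]) blast
  have A: "\<forall>k>e+q. comp k (D y) = 0"
  proof (intro allI impI)
    fix k assume k: "k > e + q"
    have "Dp (k - i) (comp i y) = 0" if "i \<in> ?T" for i
      using le[OF that] k by (intro q) simp
    then show "comp k (D y) = 0" unfolding 1 by (simp add: sum.neutral)
  qed
  have "comp (e+q) (D y) = Dp (e + q - e) (comp e y) + (\<Sum>i\<in>?T - {e}. Dp (e + q - i) (comp i y))"
    unfolding 1 by (rule sum.remove[OF fin]) simp
  also have "(\<Sum>i\<in>?T - {e}. Dp (e + q - i) (comp i y)) = 0"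
  proof (rule sum.neutral, intro ballI)
    fix i assume i: "i \<in> ?T - {e}"
    then have "i < e" using le by force
    then show "Dp (e + q - i) (comp i y) = 0" by (intro q) simp
  qed
  finally show ?thesis using A by simp
qed

lemma top_iter:
  assumes q: "\<And>p b. p > q \<Longrightarrow> Dp p b = 0" and b: "b \<in> G e"
  shows "(\<forall>k > e + int n * q. comp k ((D ^^ n) b) = 0) \<and> comp (e + int n * q) ((D ^^ n) b) = (Dp q ^^ n) b"
proof (induction n)
  case 0
  then show ?case using comp_homog[OF b] by simp
next
  case (Suc n)
  let ?y = "(D ^^ n) b"
  have t: "\<And>k. k > e + int n * q \<Longrightarrow> comp k ?y = 0" using Suc.IH by blast
  note st = top_step[OF q t]
  have eq: "e + int (Suc n) * q = (e + int n * q) + q" by (simp add: algebra_simps)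
  show ?case unfolding eq using st Suc.IH by simp
qed

lemma Dq_ln:
  assumes q: "\<And>p b. p > q \<Longrightarrow> Dp p b = 0"
  shows "locally_nilpotent (Dp q)"
  unfolding locally_nilpotent_def
proof
  fix b
  have "\<exists>n. (Dp q ^^ n) (sum (\<lambda>i. comp i b) (supp b)) = 0"
  proof (rule nilp_sum[OF Dp_add supp_finite])
    fix i
    obtain N where N: "(D ^^ N) (comp i b) = 0" using ln unfolding locally_nilpotent_def by blast
    have "(Dp q ^^ N) (comp i b) = comp (i + int N * q) ((D ^^ N) (comp i b))"
      using top_iter[OF q comp_G] by simp
    then show "\<exists>n. (Dp q ^^ n) (comp i b) = 0" using N by auto
  qed
  then show "\<exists>n. (Dp q ^^ n) b = 0" using comp_sum[of b] by simp
qed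

lemma exists_hlnd:
  assumes fg: "finitely_generated_alg K" and nz: "\<exists>b. D b \<noteq> 0"
  shows "\<exists>E\<in>HLND K G. \<exists>b. E b \<noteq> 0"
proof -
  obtain S where S: "finite S" "alg_gen K S = UNIV" using fg unfolding finitely_generated_alg_def by blast
  define Sp where "Sp = Sigma S supp"
  have finSp: "finite Sp" unfolding Sp_def using S(1) by (simp add: supp_finite)
  define S' where "S' = (\<lambda>(s, i). comp i s) ` Sp"
  have S': "alg_gen K S' = UNIV" unfolding S'_def Sp_def by (rule homog_gens[OF S])
  define P where "P = {p. \<exists>si\<in>Sp. Dp p (comp (snd si) (fst si)) \<noteq> 0}"
  have vanish: "Dp p b = 0" if "p \<notin> P" for p b
  proof (rule der_zero_gen[OF Dp_der S'])
    fix s assume "s \<in> S'"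
    then obtain si where si: "si \<in> Sp" "s = comp (snd si) (fst si)" unfolding S'_def by (auto split: prod.splits)
    then show "Dp p s = 0" using that unfolding P_def by blast
  qed
  have finP: "finite P"
  proof (rule finite_subset)
    show "P \<subseteq> (\<Union>si\<in>Sp. (\<lambda>k. k - snd si) ` supp (D (comp (snd si) (fst si))))"
    proof
      fix p assume "p \<in> P"
      then obtain si where si: "si \<in> Sp" "Dp p (comp (snd si) (fst si)) \<noteq> 0" unfolding P_def by blast
      then have "comp (snd si + p) (D (comp (snd si) (fst si))) \<noteq> 0"
        using Dp_homog[OF comp_G] by simp
      then have "snd si + p \<in> supp (D (comp (snd si) (fst si)))" unfolding supp_def by simp
      then show "p \<in> (\<Union>si\<in>Sp. (\<lambda>k. k - snd si) ` supp (D (comp (snd si) (fst si))))"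
        using si(1) by (intro UN_I[of si]) (auto intro: image_eqI[of _ _ "snd si + p"])
    qed
    show "finite (\<Union>si\<in>Sp. (\<lambda>k. k - snd si) ` supp (D (comp (snd si) (fst si))))"
      using finSp by (simp add: supp_finite)
  qed
  have Pne: "P \<noteq> {}"
  proof
    assume P0: "P = {}"
    obtain b where b: "D b \<noteq> 0" using nz by blast
    have "comp k (D b) = 0" for k
    proof -
      have "comp k (D b) = (\<Sum>i\<in>supp b. Dp (k - i) (comp i b))"
        by (rule comp_D_T[OF supp_finite]) simp
      also have "\<dots> = 0" using vanish P0 by simp
      finally show ?thesis .
    qed
    then have "D b = 0" by (rule comp_eq_zero_all)
    then show False using b by simp
  qed
  define q where "q = Max P"
  have qP: "q \<in> P" unfolding q_def using finP Pne by (rule Max_in)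
  have q: "Dp p b = 0" if "p > q" for p b
  proof (rule vanish)
    show "p \<notin> P" using Max_ge[OF finP, of p] that unfolding q_def by auto
  qed
  have "Dp q \<in> HLND K G"
    unfolding HLND_def LND_def homogeneous_map_def
    using Dp_der Dq_ln[OF q] Dp_G by blast
  moreover have "\<exists>b. Dp q b \<noteq> 0" using qP unfolding P_def by blast
  ultimately show ?thesis by blast
qed

end

lemma (in gr) nonrigid_hlnd:
  assumes fg: "finitely_generated_alg K" and nr: "\<not> rigid K"
  shows "\<exists>E\<in>HLND K G. \<exists>b. E b \<noteq> 0"
proof -
  obtain D where D: "D \<in> LND K" "D \<noteq> (\<lambda>_. 0)" using nr unfolding rigid_def by blast
  interpret der K G D using D(1) unfolding LND_def by unfold_locales auto
  have "\<exists>b. D b \<noteq> 0" using D(2) by auto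
  then show ?thesis using exists_hlnd[OF fg] by blast
qed



lemma subfield_inverse:
  fixes F :: "'f::field set"
  assumes "subfield_set F" "a \<in> F" "a \<noteq> 0"
  shows "inverse a \<in> F"
proof -
  obtain c where "c \<in> F" "a * c = 1" using assms unfolding subfield_set_def by blast
  then have "c = inverse a" using assms(3) by (metis field_class.field_inverse mult.left_commute mult_1_right mult.commute)
  then show ?thesis using \<open>c \<in> F\<close> by simp
qed

lemma subfield_ops:
  fixes F :: "'f::field set"
  assumes "subfield_set F"
  shows "0 \<in> F" "1 \<in> F" "a \<in> F \<Longrightarrow> b \<in> F \<Longrightarrow> a + b \<in> F"
    "a \<in> F \<Longrightarrow> b \<in> F \<Longrightarrow> a - b \<in> F" "a \<in> F \<Longrightarrow> b \<in> F \<Longrightarrow> a * b \<in> F"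
  using assms unfolding subfield_set_def by auto

lemma subfield_div:
  fixes F :: "'f::field set"
  assumes "subfield_set F" "a \<in> F" "b \<in> F"
  shows "a / b \<in> F"
proof (cases "b = 0")
  case True then show ?thesis using subfield_ops[OF assms(1)] by simp
next
  case False
  then show ?thesis using subfield_inverse[OF assms(1,3) False] subfield_ops(5)[OF assms(1) assms(2)]
    by (simp add: divide_inverse)
qed

lemma field_gen_subfield:
  fixes X :: "'f::field set"
  shows "subfield_set (field_gen X)"
proof -
  let ?C = "{F. subfield_set F \<and> X \<subseteq> F}"
  have inv: "inverse a \<in> F" if "F \<in> ?C" "a \<in> field_gen X" "a \<noteq> 0" for F a
    using subfield_inverse[of F a] that unfolding field_gen_def by blast
  show ?thesis unfolding subfield_set_def
  proof (intro conjI ballI impI)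
    show "0 \<in> field_gen X" unfolding field_gen_def using subfield_ops(1) by blast
    show "1 \<in> field_gen X" unfolding field_gen_def using subfield_ops(2) by blast
    fix a assume a: "a \<in> field_gen X"
    {
      fix b assume b: "b \<in> field_gen X"
      show "a + b \<in> field_gen X" using a b unfolding field_gen_def using subfield_ops(3) by blast
      show "a - b \<in> field_gen X" using a b unfolding field_gen_def using subfield_ops(4) by blast
      show "a * b \<in> field_gen X" using a b unfolding field_gen_def using subfield_ops(5) by blast
    }
    assume a0: "a \<noteq> 0"
    have "inverse a \<in> field_gen X" unfolding field_gen_def using inv[OF _ a a0] by blast
    moreover have "a * inverse a = 1" using a0 by simp
    ultimately show "\<exists>c\<in>field_gen X. a * c = 1" by blast
  qed
qed

lemma field_gen_sup: "X \<subseteq> field_gen X"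
  unfolding field_gen_def by blast

lemma field_gen_least: "subfield_set F \<Longrightarrow> X \<subseteq> F \<Longrightarrow> field_gen X \<subseteq> F"
  unfolding field_gen_def by blast

abbreviation emb :: "'a::idom \<Rightarrow> 'a fract" where "emb a \<equiv> Fraction_Field.Fract a 1"

lemma emb_add: "emb (a + b) = emb a + emb b" by simp
lemma emb_mult: "emb (a * b) = emb a * emb b" by simp
lemma emb_pow: "emb (a ^ n) = emb a ^ n"
proof (induction n)
  case 0 then show ?case by (simp add: One_fract_def)
next
  case (Suc n) then show ?case by (simp only: power_Suc emb_mult)
qed
lemma emb_sum: "finite T \<Longrightarrow> emb (sum f T) = (\<Sum>t\<in>T. emb (f t))"
proof (induction T rule: finite_induct)
  case empty then show ?case by (simp add: Zero_fract_def)
next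
  case (insert x F)
  have "emb (sum f (insert x F)) = emb (f x + sum f F)" by (simp only: sum.insert[OF insert(1,2)])
  also have "\<dots> = emb (f x) + emb (sum f F)" by (rule emb_add)
  also have "\<dots> = (\<Sum>t\<in>insert x F. emb (f t))" using insert.IH by (simp only: sum.insert[OF insert(1,2)])
  finally show ?case .
qed
lemma emb_eq0: "emb a = 0 \<longleftrightarrow> a = 0"
  by (simp add: Zero_fract_def eq_fract)

context gr
begin

definition HFR where
  "HFR R = {Fraction_Field.Fract a s | a s k. a \<in> R \<inter> G k \<and> s \<in> R \<inter> G k \<and> s \<noteq> 0}"

lemma HFR_UNIV: "HFR UNIV = HFrac G"
  unfolding HFR_def HFrac_def by simp

lemma HFR_mono: "R \<subseteq> R' \<Longrightarrow> HFR R \<subseteq> HFR R'"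
  unfolding HFR_def by blast

lemma HFR_I: "a \<in> R \<Longrightarrow> s \<in> R \<Longrightarrow> a \<in> G k \<Longrightarrow> s \<in> G k \<Longrightarrow> s \<noteq> 0 \<Longrightarrow> Fraction_Field.Fract a s \<in> HFR R"
  unfolding HFR_def by blast

lemma HFR_E:
  assumes "x \<in> HFR R"
  obtains a s k where "x = Fraction_Field.Fract a s" "a \<in> R" "s \<in> R" "a \<in> G k" "s \<in> G k" "s \<noteq> 0"
  using assms unfolding HFR_def by blast

lemma HFR_subfield:
  assumes R1: "1 \<in> R" and Radd: "\<And>x y. x \<in> R \<Longrightarrow> y \<in> R \<Longrightarrow> x + y \<in> R"
    and Rmult: "\<And>x y. x \<in> R \<Longrightarrow> y \<in> R \<Longrightarrow> x * y \<in> R"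
    and Rneg: "\<And>x. x \<in> R \<Longrightarrow> - x \<in> R"
  shows "subfield_set (HFR R)"
proof -
  have R0: "0 \<in> R" using Radd[OF R1 Rneg[OF R1]] by simp
  have Rdiff: "x - y \<in> R" if "x \<in> R" "y \<in> R" for x y using Radd[OF that(1) Rneg[OF that(2)]] by simp
  show ?thesis unfolding subfield_set_def
  proof (intro conjI ballI impI)
    show "0 \<in> HFR R" unfolding Zero_fract_def by (rule HFR_I[OF R0 R1 G0 one_G0]) simp
    show "1 \<in> HFR R" unfolding One_fract_def by (rule HFR_I[OF R1 R1 one_G0 one_G0]) simp
    fix x assume x: "x \<in> HFR R"
    then obtain a s k where 1: "x = Fraction_Field.Fract a s" "a \<in> R" "s \<in> R" "a \<in> G k" "s \<in> G k" "s \<noteq> 0"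
      by (rule HFR_E)
    {
      fix y assume y: "y \<in> HFR R"
      then obtain b t l where 2: "y = Fraction_Field.Fract b t" "b \<in> R" "t \<in> R" "b \<in> G l" "t \<in> G l" "t \<noteq> 0"
        by (rule HFR_E)
      have at: "a * t \<in> G (k + l)" using Gmult 1 2 by blast
      have bs: "b * s \<in> G (k + l)" using Gmult'[of b l s k "k + l"] 1 2 by simp
      have st: "s * t \<in> G (k + l)" using Gmult 1 2 by blast
      have st0: "s * t \<noteq> 0" using 1 2 by simp
      show "x + y \<in> HFR R" unfolding 1(1) 2(1) using 1 2
        by (simp) (rule HFR_I[OF Radd[OF Rmult Rmult] Rmult Gadd[OF at bs] st st0]; simp)
      show "x - y \<in> HFR R" unfolding 1(1) 2(1) using 1 2
        by (simp) (rule HFR_I[OF Rdiff[OF Rmult Rmult] Rmult Gdiff[OF at bs] st st0]; simp)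
      show "x * y \<in> HFR R" unfolding 1(1) 2(1) using 1 2
        by (simp) (rule HFR_I[OF Rmult Rmult Gmult Gmult st0]; simp)
    }
    assume x0: "x \<noteq> 0"
    then have a0: "a \<noteq> 0" using 1 by (auto simp: fract_collapse)
    have "Fraction_Field.Fract s a \<in> HFR R" by (rule HFR_I[OF 1(3,2,5,4) a0])
    moreover have "x * Fraction_Field.Fract s a = 1" using 1 a0 by (simp add: One_fract_def eq_fract)
    ultimately show "\<exists>c\<in>HFR R. x * c = 1" by blast
  qed
qed

lemma degZ_pair:
  assumes A1: "1 \<in> A" and Amult: "\<And>x y. x \<in> A \<Longrightarrow> y \<in> A \<Longrightarrow> x * y \<in> A"
    and k: "k \<in> degZ G A"
  shows "\<exists>u v l. u \<in> A \<and> v \<in> A \<and> u \<noteq> 0 \<and> v \<noteq> 0 \<and> u \<in> G (k + l) \<and> v \<in> G l"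
proof -
  define T where "T = {k. \<exists>u v l. u \<in> A \<and> v \<in> A \<and> u \<noteq> 0 \<and> v \<noteq> 0 \<and> u \<in> G (k + l) \<and> v \<in> G l}"
  have Apow: "x ^ n \<in> A" if "x \<in> A" for x n using that by (induction n) (auto intro: A1 Amult)
  have T0: "0 \<in> T" unfolding T_def using A1 one_G0
    by (intro CollectI exI[of _ 1] exI[of _ 1] exI[of _ 0]) simp
  have Tadd: "x + y \<in> T" if xyT: "x \<in> T" "y \<in> T" for x y
  proof -
    obtain u1 v1 l1 where 1: "u1 \<in> A" "v1 \<in> A" "u1 \<noteq> 0" "v1 \<noteq> 0" "u1 \<in> G (x + l1)" "v1 \<in> G l1"
      using xyT(1) unfolding T_def by blast
    obtain u2 v2 l2 where 2: "u2 \<in> A" "v2 \<in> A" "u2 \<noteq> 0" "v2 \<noteq> 0" "u2 \<in> G (y + l2)" "v2 \<in> G l2"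
      using xyT(2) unfolding T_def by blast
    have "u1 * u2 \<in> G ((x + y) + (l1 + l2))" using Gmult'[OF 1(5) 2(5)] by (simp add: algebra_simps)
    moreover have "v1 * v2 \<in> G (l1 + l2)" using Gmult[OF 1(6) 2(6)] .
    ultimately show ?thesis unfolding T_def using 1 2 Amult
      by (intro CollectI exI[of _ "u1 * u2"] exI[of _ "v1 * v2"] exI[of _ "l1 + l2"]) simp
  qed
  have Tmult: "c * x \<in> T" if xT: "x \<in> T" for x c
  proof -
    obtain u v l where 1: "u \<in> A" "v \<in> A" "u \<noteq> 0" "v \<noteq> 0" "u \<in> G (x + l)" "v \<in> G l"
      using xT unfolding T_def by blast
    show ?thesis
    proof (cases "c \<ge> 0")
      case True
      have "u ^ nat c \<in> G (c * x + c * l)" using Gpow[OF 1(5), of "nat c"] True by (simp add: algebra_simps)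
      moreover have "v ^ nat c \<in> G (c * l)" using Gpow[OF 1(6), of "nat c"] True by simp
      ultimately show ?thesis unfolding T_def using 1 Apow
        by (intro CollectI exI[of _ "u ^ nat c"] exI[of _ "v ^ nat c"] exI[of _ "c * l"]) (simp add: algebra_simps)
    next
      case False
      have "v ^ nat (- c) \<in> G (c * x + (- c) * (x + l))" using Gpow[OF 1(6), of "nat (-c)"] False
        by (simp add: algebra_simps)
      moreover have "u ^ nat (- c) \<in> G ((- c) * (x + l))" using Gpow[OF 1(5), of "nat (-c)"] False by simp
      ultimately show ?thesis unfolding T_def using 1 Apow
        by (intro CollectI exI[of _ "v ^ nat (-c)"] exI[of _ "u ^ nat (-c)"] exI[of _ "(- c) * (x + l)"]) simp
    qed
  qed
  have gensT: "{i. \<exists>a\<in>A \<inter> G i. a \<noteq> 0} \<subseteq> T"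
  proof
    fix i assume "i \<in> {i. \<exists>a\<in>A \<inter> G i. a \<noteq> 0}"
    then obtain a where "a \<in> A" "a \<in> G i" "a \<noteq> 0" by blast
    then show "i \<in> T" unfolding T_def using A1 one_G0 by (intro CollectI exI[of _ a] exI[of _ 1] exI[of _ 0]) simp
  qed
  obtain F c where F: "finite F" "F \<subseteq> {i. \<exists>a\<in>A \<inter> G i. a \<noteq> 0}" "k = (\<Sum>i\<in>F. c i * i)"
    using k unfolding degZ_def int_subgroup_gen_def mem_Collect_eq by (elim exE conjE)
  have "(\<Sum>i\<in>F. c i * i) \<in> T" using F(1,2)
  proof (induction F rule: finite_induct)
    case empty then show ?case using T0 by simp
  next
    case (insert i F)
    then have "i \<in> T" using gensT by blast
    then have "c i * i \<in> T" by (rule Tmult)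
    moreover have "(\<Sum>i\<in>F. c i * i) \<in> T" using insert by simp
    ultimately show ?case using Tadd insert(1,2) by simp
  qed
  then show ?thesis using F(3) unfolding T_def by simp
qed

end



context hder
begin

lemma ker_1: "D 1 = 0" by simp
lemma ker_add: "D x = 0 \<Longrightarrow> D y = 0 \<Longrightarrow> D (x + y) = 0" by (simp add: Dadd)
lemma ker_mult: "D x = 0 \<Longrightarrow> D y = 0 \<Longrightarrow> D (x * y) = 0" by (simp add: Dmult)
lemma ker_neg: "D x = 0 \<Longrightarrow> D (- x) = 0" by (simp add: Dneg)

lemma HFR_ker_subfield: "subfield_set (HFR (ker D))"
  by (rule HFR_subfield) (auto simp: kerD Dadd Dmult Dneg)

lemma lin_indep:
  assumes Dr: "D r \<noteq> 0" and DDr: "D (D r) = 0"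
  shows "\<forall>\<alpha>. (\<forall>j\<le>N. D (\<alpha> j) = 0) \<longrightarrow> (\<Sum>j\<le>N. \<alpha> j * r ^ j) = 0 \<longrightarrow> (\<forall>j\<le>N. \<alpha> j = 0)"
proof (induction N)
  case 0 then show ?case by simp
next
  case (Suc N)
  show ?case
  proof (rule allI, intro impI)
    fix \<alpha> assume k: "\<forall>j\<le>Suc N. D (\<alpha> j) = 0" and s: "(\<Sum>j\<le>Suc N. \<alpha> j * r ^ j) = 0"
    have r0: "r \<noteq> 0" using Dr by auto
    have nur: "nu (r ^ j) = j" for j using nu_pow[OF r0, of j] nu_slice[OF Dr DDr] by simp
    have z: "(D ^^ Suc N) (r ^ j) = 0" if "j \<le> N" for j
      using Dn_more[OF nu1[of "r ^ j"], of "Suc N"] nur that by simp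
    have nz: "(D ^^ Suc N) (r ^ Suc N) \<noteq> 0"
      using nu3[of "r ^ Suc N"] nur[of "Suc N"] r0 by simp
    have "(D ^^ Suc N) (\<Sum>j\<le>Suc N. \<alpha> j * r ^ j) = (\<Sum>j\<le>Suc N. \<alpha> j * (D ^^ Suc N) (r ^ j))"
    proof -
      have "(D ^^ Suc N) (\<Sum>j\<le>Suc N. \<alpha> j * r ^ j) = (\<Sum>j\<le>Suc N. (D ^^ Suc N) (\<alpha> j * r ^ j))"
        by (rule Dnsum) simp
      also have "\<dots> = (\<Sum>j\<le>Suc N. \<alpha> j * (D ^^ Suc N) (r ^ j))"
      proof (rule sum.cong)
        fix j assume "j \<in> {..Suc N}"
        then have "D (\<alpha> j) = 0" using k by simp
        then show "(D ^^ Suc N) (\<alpha> j * r ^ j) = \<alpha> j * (D ^^ Suc N) (r ^ j)" by (rule Dn_ker_mult)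
      qed simp
      finally show ?thesis .
    qed
    also have "\<dots> = (\<Sum>j\<le>N. \<alpha> j * (D ^^ Suc N) (r ^ j)) + \<alpha> (Suc N) * (D ^^ Suc N) (r ^ Suc N)"
      by (simp del: funpow.simps)
    also have "(\<Sum>j\<le>N. \<alpha> j * (D ^^ Suc N) (r ^ j)) = 0" using z by simp
    finally have "\<alpha> (Suc N) * (D ^^ Suc N) (r ^ Suc N) = 0" using s by simp
    then have aS: "\<alpha> (Suc N) = 0" using nz by simp
    then have "(\<Sum>j\<le>N. \<alpha> j * r ^ j) = 0" using s by simp
    then have "\<forall>j\<le>N. \<alpha> j = 0" using Suc.IH k by simp
    then show "\<forall>j\<le>Suc N. \<alpha> j = 0" using aS le_Suc_eq by blast
  qed
qed

definition Fk where "Fk = {Fraction_Field.Fract \<alpha> \<beta> | \<alpha> \<beta>. D \<alpha> = 0 \<and> D \<beta> = 0 \<and> \<beta> \<noteq> 0}"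

lemma Fk_mult:
  assumes "x \<in> Fk" "y \<in> Fk" shows "x * y \<in> Fk"
proof -
  obtain a b where 1: "x = Fraction_Field.Fract a b" "D a = 0" "D b = 0" "b \<noteq> 0"
    using assms(1) unfolding Fk_def by blast
  obtain c d where 2: "y = Fraction_Field.Fract c d" "D c = 0" "D d = 0" "d \<noteq> 0"
    using assms(2) unfolding Fk_def by blast
  have "x * y = Fraction_Field.Fract (a * c) (b * d)" using 1 2 by simp
  moreover have "D (a * c) = 0" "D (b * d) = 0" "b * d \<noteq> 0" using 1 2 by (simp_all add: Dmult)
  ultimately show ?thesis unfolding Fk_def by blast
qed

lemma Fk_1: "1 \<in> Fk"
  unfolding Fk_def One_fract_def by (rule CollectI, rule exI[of _ 1], rule exI[of _ 1]) simp

lemma Fk_pow: "x \<in> Fk \<Longrightarrow> x ^ n \<in> Fk"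
  by (induction n) (auto intro: Fk_1 Fk_mult)

lemma HFR_Fk: "HFR (ker D) \<subseteq> Fk"
  unfolding HFR_def Fk_def ker_def by blast

lemma clear_denoms:
  fixes N :: nat
  shows "(\<forall>j\<le>N. f j \<in> Fk) \<longrightarrow> (\<exists>\<beta> \<alpha>. D \<beta> = 0 \<and> \<beta> \<noteq> 0 \<and> (\<forall>j\<le>N. D (\<alpha> j) = 0 \<and> emb \<beta> * f j = emb (\<alpha> j)))"
proof (induction N)
  case 0
  show ?case
  proof
    assume "\<forall>j\<le>0. f j \<in> Fk"
    then obtain a b where ab: "f 0 = Fraction_Field.Fract a b" "D a = 0" "D b = 0" "b \<noteq> 0"
      unfolding Fk_def by auto
    have "emb b * f 0 = emb a" using ab by (simp add: eq_fract)
    then show "\<exists>\<beta> \<alpha>. D \<beta> = 0 \<and> \<beta> \<noteq> 0 \<and> (\<forall>j\<le>0. D (\<alpha> j) = 0 \<and> emb \<beta> * f j = emb (\<alpha> j))"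
      using ab by (intro exI[of _ b] exI[of _ "\<lambda>_. a"]) auto
  qed
next
  case (Suc N)
  show ?case
  proof
    assume all: "\<forall>j\<le>Suc N. f j \<in> Fk"
    then obtain \<beta> \<alpha> where IH: "D \<beta> = 0" "\<beta> \<noteq> 0" "\<forall>j\<le>N. D (\<alpha> j) = 0 \<and> emb \<beta> * f j = emb (\<alpha> j)"
      using Suc.IH by auto
    obtain a b where ab: "f (Suc N) = Fraction_Field.Fract a b" "D a = 0" "D b = 0" "b \<noteq> 0"
      using all unfolding Fk_def by auto
    define \<alpha>' where "\<alpha>' j = (if j \<le> N then \<alpha> j * b else a * \<beta>)" for j
    have "D (\<alpha>' j) = 0 \<and> emb (\<beta> * b) * f j = emb (\<alpha>' j)" if "j \<le> Suc N" for j
    proof (cases "j \<le> N")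
      case True
      have "emb (\<beta> * b) * f j = emb b * (emb \<beta> * f j)" by (simp add: algebra_simps)
      also have "\<dots> = emb (\<alpha> j * b)" using IH(3) True by (simp add: mult.commute)
      finally show ?thesis using IH(3) True ab unfolding \<alpha>'_def by (simp add: Dmult)
    next
      case False
      then have j: "j = Suc N" using that by simp
      have "emb (\<beta> * b) * f j = emb (a * \<beta>)" using j ab by (simp add: eq_fract algebra_simps)
      then show ?thesis using False IH ab unfolding \<alpha>'_def by (simp add: Dmult)
    qed
    then show "\<exists>\<beta> \<alpha>. D \<beta> = 0 \<and> \<beta> \<noteq> 0 \<and> (\<forall>j\<le>Suc N. D (\<alpha> j) = 0 \<and> emb \<beta> * f j = emb (\<alpha> j))"
      using IH ab by (intro exI[of _ "\<beta> * b"] exI[of _ \<alpha>']) (auto simp: Dmult)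
  qed
qed

lemma transc_r:
  assumes Dr: "D r \<noteq> 0" and DDr: "D (D r) = 0"
  shows "transcendental_over Fk (emb r)"
  unfolding transcendental_over_def
proof (intro allI impI)
  fix p :: "'a fract poly" assume a: "(\<forall>j. coeff p j \<in> Fk) \<and> poly p (emb r) = 0"
  let ?N = "degree p"
  obtain \<beta> \<alpha> where ba: "D \<beta> = 0" "\<beta> \<noteq> 0" "\<forall>j\<le>?N. D (\<alpha> j) = 0 \<and> emb \<beta> * coeff p j = emb (\<alpha> j)"
    using clear_denoms[of ?N "coeff p"] a by blast
  have "emb \<beta> * poly p (emb r) = (\<Sum>j\<le>?N. emb \<beta> * coeff p j * emb r ^ j)"
    by (simp add: poly_altdef sum_distrib_left mult.assoc)
  also have "\<dots> = (\<Sum>j\<le>?N. emb (\<alpha> j * r ^ j))"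
  proof (rule sum.cong)
    fix j assume "j \<in> {..?N}"
    then have "emb \<beta> * coeff p j = emb (\<alpha> j)" using ba(3) by simp
    then show "emb \<beta> * coeff p j * emb r ^ j = emb (\<alpha> j * r ^ j)" by (metis emb_mult emb_pow)
  qed simp
  also have "\<dots> = emb (\<Sum>j\<le>?N. \<alpha> j * r ^ j)" by (simp add: emb_sum)
  finally have "emb (\<Sum>j\<le>?N. \<alpha> j * r ^ j) = 0" using a by simp
  then have "(\<Sum>j\<le>?N. \<alpha> j * r ^ j) = 0" by (simp add: emb_eq0)
  then have z: "\<forall>j\<le>?N. \<alpha> j = 0" using lin_indep[OF Dr DDr, of ?N] ba(3) by blast
  have "emb \<beta> \<noteq> 0" using ba(2) by (simp add: emb_eq0)
  show "p = 0"
  proof (rule poly_eqI)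
    fix j show "coeff p j = coeff 0 j"
    proof (cases "j \<le> ?N")
      case True
      then have "emb \<beta> * coeff p j = 0" using ba(3) z by (simp add: Zero_fract_def)
      then show ?thesis using \<open>emb \<beta> \<noteq> 0\<close> by simp
    next
      case False then show ?thesis by (simp add: coeff_eq_0)
    qed
  qed
qed

lemma transc_t:
  assumes Dr: "D r \<noteq> 0" and DDr: "D (D r) = 0" and c: "c \<in> Fk" "c \<noteq> 0" and F: "F \<subseteq> Fk"
  shows "transcendental_over F (emb r * c)"
  unfolding transcendental_over_def
proof (intro allI impI)
  fix p :: "'a fract poly" assume a: "(\<forall>j. coeff p j \<in> F) \<and> poly p (emb r * c) = 0"
  let ?q = "pcompose p [:0, c:]"
  have "poly ?q (emb r) = 0" using a by (simp add: poly_pcompose algebra_simps)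
  moreover have "\<forall>j. coeff ?q j \<in> Fk"
  proof
    fix j
    have "coeff p j \<in> Fk" using a F by blast
    then show "coeff ?q j \<in> Fk" unfolding coeff_pcompose_linear by (intro Fk_mult Fk_pow c(1))
  qed
  ultimately have "?q = 0" using transc_r[OF Dr DDr] unfolding transcendental_over_def by blast
  show "p = 0"
  proof (rule poly_eqI)
    fix j
    have "c ^ j * coeff p j = 0" using \<open>?q = 0\<close> coeff_pcompose_linear[of p c j] by simp
    then show "coeff p j = coeff 0 j" using c(2) by simp
  qed
qed

end


context hder
begin

lemma expand:
  assumes r: "r \<in> G \<rho>" and Dr0: "D r \<noteq> 0" and DDr: "D (D r) = 0"
    and u: "u \<in> G (\<rho> + l)" "D u = 0" "u \<noteq> 0" and v: "v \<in> G l" "D v = 0" "v \<noteq> 0"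
    and S: "subfield_set S" and FS: "HFR (ker D) \<subseteq> S"
    and tS: "Fraction_Field.Fract (r * v) u \<in> S"
  shows "\<forall>b e p. nu b = m \<longrightarrow> b \<in> G e \<longrightarrow> p \<in> G e \<longrightarrow> D p = 0 \<longrightarrow> p \<noteq> 0 \<longrightarrow> Fraction_Field.Fract b p \<in> S"
proof (induction m rule: less_induct)
  case (less m)
  show ?case
  proof (intro allI impI)
    fix b e p assume m: "nu b = m" and b: "b \<in> G e" and p: "p \<in> G e" "D p = 0" "p \<noteq> 0"
    show "Fraction_Field.Fract b p \<in> S"
    proof (cases "m = 0")
      case True
      then have "D b = 0" using m nu_zero_iff by blast
      then have "Fraction_Field.Fract b p \<in> HFR (ker D)"
        using p b by (intro HFR_I) (auto simp: kerD)
      then show ?thesis using FS by blast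
    next
      case False
      define a where "a = D r"
      have aG: "a \<in> G (\<rho> + h)" using DG[OF r] unfolding a_def .
      have a0: "a \<noteq> 0" and Da: "D a = 0" using Dr0 DDr unfolding a_def by auto
      obtain N \<phi> Y where N: "N > 0" and D\<phi>: "D \<phi> = 0" and \<phi>G: "\<phi> \<in> G (e + int m * (\<rho> + h))"
        and YG: "Y \<in> G (e + int m * (\<rho> + h) - \<rho>)"
        and eq: "of_nat N * a ^ m * b = \<phi> + r * Y"
        using phi[OF b r a_def[symmetric] Da nu1[of b]] m by blast
      define P where "P = of_nat N * a ^ m * p"
      have PG: "P \<in> G (e + int m * (\<rho> + h))"
      proof -
        have "of_nat N \<in> G 0" using Gof_int[of "int N"] by simp
        then have "of_nat N * a ^ m \<in> G (0 + int m * (\<rho> + h))" by (rule Gmult[OF _ Gpow[OF aG]])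
        then have "of_nat N * a ^ m * p \<in> G ((0 + int m * (\<rho> + h)) + e)" by (rule Gmult[OF _ p(1)])
        then show ?thesis unfolding P_def by (simp add: algebra_simps)
      qed
      have DN: "D (of_nat N) = 0" using Dnat[of N 1] by simp
      have DP: "D P = 0" unfolding P_def using p(2) Dpow_ker[OF Da, of m] DN
        by (simp add: Dmult)
      have P0: "P \<noteq> 0" unfolding P_def using N a0 p(3) by simp
      have Fphi: "Fraction_Field.Fract \<phi> P \<in> S"
      proof -
        have "Fraction_Field.Fract \<phi> P \<in> HFR (ker D)"
          by (rule HFR_I[OF _ _ \<phi>G PG P0]) (auto simp: kerD D\<phi> DP)
        then show ?thesis using FS by blast
      qed
      have FY: "Fraction_Field.Fract (u * Y) (v * P) \<in> S"
      proof (cases "Y = 0")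
        case True
        then show ?thesis using subfield_ops(1)[OF S] by (simp add: fract_collapse)
      next
        case Y0: False
        have "(D ^^ Suc m) (r * Y) = 0"
        proof -
          have "r * Y = of_nat N * a ^ m * b - \<phi>" using eq by simp
          moreover have "(D ^^ Suc m) (of_nat N * a ^ m * b) = 0"
          proof -
            have "D (of_nat N * a ^ m) = 0" using Dnat[of N "a ^ m"] Dpow_ker[OF Da] by simp
            then have "(D ^^ Suc m) (of_nat N * a ^ m * b) = of_nat N * a ^ m * (D ^^ Suc m) b"
              by (rule Dn_ker_mult)
            then show ?thesis using nu1[of b] m by simp
          qed
          moreover have "(D ^^ Suc m) \<phi> = 0" using Dn_more[of 1 \<phi> "Suc m"] D\<phi> by simp
          ultimately show ?thesis by (simp add: Dndiff del: funpow.simps)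
        qed
        then have "nu (r * Y) \<le> m" by (rule nu2)
        moreover have "nu (r * Y) = 1 + nu Y" using nu_mult[of r Y] Dr0 Y0 nu_slice[OF Dr0 DDr] by (metis D0)
        ultimately have nY: "nu Y < m" using False by simp
        have nuY: "nu (u * Y) = nu Y" using nu_mult[OF u(3) Y0] u(2) nu_zero_iff by simp
        have uYG: "u * Y \<in> G (l + (e + int m * (\<rho> + h)))"
          using Gmult[OF u(1) YG] by (simp add: algebra_simps)
        have vPG: "v * P \<in> G (l + (e + int m * (\<rho> + h)))" using Gmult[OF v(1) PG] .
        have "D (v * P) = 0" using v(2) DP by (simp add: Dmult)
        moreover have "v * P \<noteq> 0" using v(3) P0 by simp
        ultimately show ?thesis using less[OF nY[unfolded nuY[symmetric]]] nuY uYG vPG by blast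
      qed
      have e1: "Fraction_Field.Fract b p = Fraction_Field.Fract \<phi> P + Fraction_Field.Fract (r * v) u * Fraction_Field.Fract (u * Y) (v * P)"
      proof -
        have "Fraction_Field.Fract \<phi> P + Fraction_Field.Fract (r * v) u * Fraction_Field.Fract (u * Y) (v * P)
            = Fraction_Field.Fract (\<phi> * (u * (v * P)) + (r * v * (u * Y)) * P) (P * (u * (v * P)))"
          using P0 u(3) v(3) by simp
        also have "\<dots> = Fraction_Field.Fract b p"
        proof -
          have "(\<phi> * (u * (v * P)) + (r * v * (u * Y)) * P) * p = b * (P * (u * (v * P)))"
          proof -
            have "(\<phi> * (u * (v * P)) + (r * v * (u * Y)) * P) * p = (\<phi> + r * Y) * (u * v * P * p)"
              by (simp add: algebra_simps)
            also have "\<dots> = (of_nat N * a ^ m * b) * (u * v * P * p)" using eq by simp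
            also have "\<dots> = b * (P * (u * (v * P)))" unfolding P_def by (simp add: algebra_simps)
            finally show ?thesis .
          qed
          then show ?thesis using P0 u(3) v(3) p(3) by (simp add: eq_fract)
        qed
        finally show ?thesis by simp
      qed
      show ?thesis unfolding e1
        by (intro subfield_ops(3)[OF S] subfield_ops(5)[OF S] Fphi tS FY)
    qed
  qed
qed

lemma ruled:
  assumes Z: "degZ G (ker D) = degZ G UNIV" and nz: "\<exists>b. D b \<noteq> 0"
  shows "ruled_over (HFrac G) ((\<lambda>c. Fraction_Field.Fract c 1) ` K)"
proof -
  obtain r \<rho> where r: "r \<in> G \<rho>" and Dr0: "D r \<noteq> 0" and DDr: "D (D r) = 0"
    using slice[OF nz] by blast
  have r0: "r \<noteq> 0" using Dr0 by auto
  have ker1: "1 \<in> ker D" and kermult: "\<And>x y. x \<in> ker D \<Longrightarrow> y \<in> ker D \<Longrightarrow> x * y \<in> ker D"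
    by (auto simp: kerD Dmult)
  have "\<rho> \<in> degZ G (ker D)" unfolding Z using degZ_mem[of r UNIV \<rho>] r r0 by simp
  then obtain u v l where uv: "u \<in> ker D" "v \<in> ker D" "u \<noteq> 0" "v \<noteq> 0" "u \<in> G (\<rho> + l)" "v \<in> G l"
    using degZ_pair[OF ker1 kermult] by blast
  define F where "F = HFR (ker D)"
  define L where "L = HFR UNIV"
  define t where "t = Fraction_Field.Fract (r * v) u"
  have LH: "L = HFrac G" unfolding L_def by (rule HFR_UNIV)
  have Fsub: "subfield_set F" unfolding F_def by (rule HFR_ker_subfield)
  have Lsub: "subfield_set L" unfolding L_def by (rule HFR_subfield) auto
  have kF: "(\<lambda>c. Fraction_Field.Fract c 1) ` K \<subseteq> F"
  proof
    fix x assume "x \<in> (\<lambda>c. Fraction_Field.Fract c 1) ` K"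
    then obtain c where c: "c \<in> K" "x = Fraction_Field.Fract c 1" by blast
    show "x \<in> F" unfolding F_def c(2)
      by (rule HFR_I[OF _ _ K_G0[OF c(1)] one_G0]) (auto simp: kerD DK c(1))
  qed
  have FL: "F \<subseteq> L" unfolding F_def L_def by (rule HFR_mono) simp
  have rvG: "r * v \<in> G (\<rho> + l)" using Gmult[OF r uv(6)] .
  have tL: "t \<in> L" unfolding t_def L_def by (rule HFR_I[OF _ _ rvG uv(5) uv(3)]) auto
  have tr: "t = emb r * Fraction_Field.Fract v u" unfolding t_def by simp
  have cFk: "Fraction_Field.Fract v u \<in> Fk" unfolding Fk_def using uv by (auto simp: kerD)
  have c0: "Fraction_Field.Fract v u \<noteq> 0" using uv(3,4) by (simp add: Zero_fract_def eq_fract)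
  have trans: "transcendental_over F t" unfolding tr F_def
    by (rule transc_t[OF Dr0 DDr cFk c0 HFR_Fk])
  have eqL: "L = field_gen (F \<union> {t})"
  proof
    show "field_gen (F \<union> {t}) \<subseteq> L" by (rule field_gen_least[OF Lsub]) (use FL tL in blast)
    show "L \<subseteq> field_gen (F \<union> {t})"
    proof
      let ?S = "field_gen (F \<union> {t})"
      have S: "subfield_set ?S" by (rule field_gen_subfield)
      have FS: "HFR (ker D) \<subseteq> ?S" using field_gen_sup[of "F \<union> {t}"] unfolding F_def by blast
      have tS: "Fraction_Field.Fract (r * v) u \<in> ?S" using field_gen_sup[of "F \<union> {t}"] unfolding t_def by blast
      have Du: "D u = 0" and Dv: "D v = 0" using uv(1,2) by (auto simp: kerD)
      note ex = expand[OF r Dr0 DDr uv(5) Du uv(3) uv(6) Dv uv(4) S FS tS, rule_format]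
      fix x assume "x \<in> L"
      then obtain b s k where x: "x = Fraction_Field.Fract b s" "b \<in> G k" "s \<in> G k" "s \<noteq> 0"
        unfolding L_def by (rule HFR_E) blast
      have "k \<in> degZ G (ker D)" unfolding Z using degZ_mem[of s UNIV k] x by simp
      then obtain P Q l' where PQ: "P \<in> ker D" "Q \<in> ker D" "P \<noteq> 0" "Q \<noteq> 0" "P \<in> G (k + l')" "Q \<in> G l'"
        using degZ_pair[OF ker1 kermult] by blast
      have bQ: "b * Q \<in> G (k + l')" using Gmult[OF x(2) PQ(6)] .
      have sQ: "s * Q \<in> G (k + l')" using Gmult[OF x(3) PQ(6)] .
      have 1: "Fraction_Field.Fract (b * Q) P \<in> ?S"
        using ex[OF refl bQ PQ(5) _ PQ(3)] PQ(1) by (simp add: kerD)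
      have 2: "Fraction_Field.Fract (s * Q) P \<in> ?S"
        using ex[OF refl sQ PQ(5) _ PQ(3)] PQ(1) by (simp add: kerD)
      have "x = Fraction_Field.Fract (b * Q) P / Fraction_Field.Fract (s * Q) P"
        unfolding x(1) using PQ(3,4) x(4) by (simp add: eq_fract algebra_simps)
      then show "x \<in> ?S" using subfield_div[OF S 1 2] by simp
    qed
  qed
  show ?thesis unfolding ruled_over_def LH[symmetric]
    using Fsub kF FL tL trans eqL by blast
qed

end


theorem proposition3p10:
  fixes K :: "'b::{idom, ring_char_0} set"
    and G :: "int \<Rightarrow> 'b set"
    and n :: nat and x :: "nat \<Rightarrow> 'b" and d :: "nat \<Rightarrow> int"
  assumes K: "subfield_set K"
    and G: "graded_algebra K G"
    and n: "n \<ge> 2"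
    and xprime: "\<forall>i\<in>{1..n}. prime_elem (x i)"
    and xdeg: "\<forall>i\<in>{1..n}. x i \<in> G (d i)"
    and gen: "int_subgroup_gen (d ` {1..n}) = degZ G UNIV"
    and type0: "type_seq n d = 0"
    and nonassoc: "\<forall>i\<in>{1..n}. \<forall>j\<in>{1..n}. i \<noteq> j \<longrightarrow> \<not> (x i dvd x j \<and> x j dvd x i)"
  shows "(\<forall>D\<in>HLND K G. degZ G (ker D) = degZ G UNIV)
     \<and> (finitely_generated_alg K \<and> \<not> rigid K \<longrightarrow>
          ruled_over (HFrac G) ((\<lambda>c. Fraction_Field.Fract c 1) ` K))"
proof -
  interpret gr K G using K G by unfold_locales
  have hl: "degZ G (ker D) = degZ G UNIV" if D: "D \<in> HLND K G" for D
  proof -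
    have 1: "k_derivation K D" "locally_nilpotent D" "homogeneous_map G D"
      using D unfolding HLND_def LND_def by auto
    then obtain h where h: "\<And>i. D ` G i \<subseteq> G (i + h)" unfolding homogeneous_map_def by blast
    interpret hder K G D h using 1 h by unfold_locales auto
    show ?thesis by (rule partA[OF xprime xdeg gen type0 nonassoc])
  qed
  have "ruled_over (HFrac G) ((\<lambda>c. Fraction_Field.Fract c 1) ` K)"
    if fg: "finitely_generated_alg K" and nr: "\<not> rigid K"
  proof -
    obtain E where E: "E \<in> HLND K G" and nz: "\<exists>b. E b \<noteq> 0" using nonrigid_hlnd[OF fg nr] by blast
    have 1: "k_derivation K E" "locally_nilpotent E" "homogeneous_map G E"
      using E unfolding HLND_def LND_def by auto
    then obtain h where h: "\<And>i. E ` G i \<subseteq> G (i + h)" unfolding homogeneous_map_def by blast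
    interpret hder K G E h using 1 h by unfold_locales auto
    show ?thesis by (rule ruled[OF hl[OF E] nz])
  qed
  then show ?thesis using hl by blast
qed

end
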